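(* Let $E$ be a graph with finitely many vertices and $K$ a field of characteristic $0$. Let $H\subseteq E^0$ be hereditary and saturated, $w\in B_H$ a breaking vertex with $M(w)=E^0\setminus H$, and $P=I(H,B_H\setminus\{w\})$ (a primitive ideal of "type I"). Assume $L_K(E)/P$ is noncommutative. Then there exists $f\in E^1$ with $r(f)=w$ such that $\langle 1+2w^Hf^*,\ 1+2fw^H\rangle$ is a non-cyclic free subgroup of $L_K(E)^\times$.
   Context: A graph $E=(E^0,E^1,r,s)$; $L_K(E)$ is the free associative $K$-algebra on $E^0\cup E^1\cup\{e^*\}$ subject to $vv'=\delta_{v,v'}v$, $s(e)e=er(e)=e$, $r(e)e^*=e^*s(e)=e^*$, $e^*f=\delta_{e,f}r(e)$, and $v=\sum_{s(e)=v}ee^*$ for every regular vertex $v$ (emitting a finite nonzero number of edges); with $E^0$ finite it is unital with $1=\sum_v v$. Write $u\ge v$ if there is a path from $u$ to $v$; $M(v)=\{u\in E^0:u\ge v\}$. $H$ hereditary: $u\in H$, $u\ge v\Rightarrow v\in H$; saturated: for regular $v$, $r(s^{-1}(v))\subseteq H\Rightarrow v\in H$. A breaking vertex of $H$ is an infinite emitter $w\notin H$ with $1\le|s^{-1}(w)\cap r^{-1}(E^0\setminus H)|<\infty$; $B_H$ is the set of them; $w^H=w-\sum_{s(e)=w,\,r(e)\notin H}ee^*$. For $S\subseteq B_H$, $I(H,S)$ is the ideal of $L_K(E)$ generated by $H\cup\{v^H:v\in S\}$. *)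

theory Defs
  imports "HOL-Algebra.Algebra"
begin

text \<open>A graph E is given by a vertex type 'v (E^0 = UNIV, finite in the theorem),
an edge type 'e (E^1 = UNIV), and source/range maps s, r.\<close>

definition path_rel :: "('e \<Rightarrow> 'v) \<Rightarrow> ('e \<Rightarrow> 'v) \<Rightarrow> ('v \<times> 'v) set" where
  "path_rel s r = {(s e, r e) | e. True}\<^sup>*"

definition geq_path :: "('e \<Rightarrow> 'v) \<Rightarrow> ('e \<Rightarrow> 'v) \<Rightarrow> 'v \<Rightarrow> 'v \<Rightarrow> bool" where
  "geq_path s r u v \<longleftrightarrow> (u, v) \<in> path_rel s r"

definition Mset :: "('e \<Rightarrow> 'v) \<Rightarrow> ('e \<Rightarrow> 'v) \<Rightarrow> 'v \<Rightarrow> 'v set" where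
  "Mset s r v = {u. geq_path s r u v}"

definition regular :: "('e \<Rightarrow> 'v) \<Rightarrow> 'v \<Rightarrow> bool" where
  "regular s v \<longleftrightarrow> finite {e. s e = v} \<and> {e. s e = v} \<noteq> {}"

definition infinite_emitter :: "('e \<Rightarrow> 'v) \<Rightarrow> 'v \<Rightarrow> bool" where
  "infinite_emitter s v \<longleftrightarrow> infinite {e. s e = v}"

definition hereditary :: "('e \<Rightarrow> 'v) \<Rightarrow> ('e \<Rightarrow> 'v) \<Rightarrow> 'v set \<Rightarrow> bool" where
  "hereditary s r H \<longleftrightarrow> (\<forall>u\<in>H. \<forall>v. geq_path s r u v \<longrightarrow> v \<in> H)"

definition saturated :: "('e \<Rightarrow> 'v) \<Rightarrow> ('e \<Rightarrow> 'v) \<Rightarrow> 'v set \<Rightarrow> bool" where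
  "saturated s r H \<longleftrightarrow> (\<forall>v. regular s v \<and> r ` {e. s e = v} \<subseteq> H \<longrightarrow> v \<in> H)"

definition breaking_vertices :: "('e \<Rightarrow> 'v) \<Rightarrow> ('e \<Rightarrow> 'v) \<Rightarrow> 'v set \<Rightarrow> 'v set" where
  "breaking_vertices s r H = {w. infinite_emitter s w \<and> w \<notin> H \<and>
      finite {e. s e = w \<and> r e \<notin> H} \<and> 1 \<le> card {e. s e = w \<and> r e \<notin> H}}"

datatype ('v, 'e) gen = GV 'v | GE 'e | GS 'e  \<comment> \<open>vertex, edge, ghost edge e^*\<close>

text \<open>Elements: finitely supported K-valued functions on words in the generators.\<close>

type_synonym ('v, 'e, 'k) fa = "('v, 'e) gen list \<Rightarrow> 'k"

definition fa_carrier :: "('v, 'e, 'k::field) fa set" where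
  "fa_carrier = {f. finite {w. f w \<noteq> 0}}"

definition fa_mult :: "('v, 'e, 'k::field) fa \<Rightarrow> ('v, 'e, 'k) fa \<Rightarrow> ('v, 'e, 'k) fa" where
  "fa_mult f g = (\<lambda>w. \<Sum>i\<le>length w. f (take i w) * g (drop i w))"

definition fa_add :: "('v, 'e, 'k::field) fa \<Rightarrow> ('v, 'e, 'k) fa \<Rightarrow> ('v, 'e, 'k) fa" where
  "fa_add f g = (\<lambda>w. f w + g w)"

definition fa_diff :: "('v, 'e, 'k::field) fa \<Rightarrow> ('v, 'e, 'k) fa \<Rightarrow> ('v, 'e, 'k) fa" where
  "fa_diff f g = (\<lambda>w. f w - g w)"

definition fa_zero :: "('v, 'e, 'k::field) fa" where
  "fa_zero = (\<lambda>w. 0)"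

definition fa_one :: "('v, 'e, 'k::field) fa" where
  "fa_one = (\<lambda>w. if w = [] then 1 else 0)"

definition fa_gen :: "('v, 'e) gen \<Rightarrow> ('v, 'e, 'k::field) fa" where
  "fa_gen x = (\<lambda>w. if w = [x] then 1 else 0)"

definition fa_sum :: "'i set \<Rightarrow> ('i \<Rightarrow> ('v, 'e, 'k::field) fa) \<Rightarrow> ('v, 'e, 'k) fa" where
  "fa_sum A g = (\<lambda>w. \<Sum>i\<in>A. g i w)"

definition FA :: "('v, 'e, 'k::field) fa ring" where
  "FA = \<lparr>carrier = fa_carrier, monoid.mult = fa_mult, one = fa_one, ring.zero = fa_zero, ring.add = fa_add\<rparr>"

definition ee_star :: "'e \<Rightarrow> ('v, 'e, 'k::field) fa" where
  "ee_star e = fa_mult (fa_gen (GE e)) (fa_gen (GS e))"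

definition lpa_relations :: "('e \<Rightarrow> 'v) \<Rightarrow> ('e \<Rightarrow> 'v) \<Rightarrow> ('v, 'e, 'k::field) fa set" where
  "lpa_relations s r =
     {fa_diff (fa_mult (fa_gen (GV v)) (fa_gen (GV v'))) (if v = v' then fa_gen (GV v) else fa_zero) | v v'. True}
   \<union> {fa_diff (fa_mult (fa_gen (GV (s e))) (fa_gen (GE e))) (fa_gen (GE e)) | e. True}
   \<union> {fa_diff (fa_mult (fa_gen (GE e)) (fa_gen (GV (r e)))) (fa_gen (GE e)) | e. True}
   \<union> {fa_diff (fa_mult (fa_gen (GV (r e))) (fa_gen (GS e))) (fa_gen (GS e)) | e. True}
   \<union> {fa_diff (fa_mult (fa_gen (GS e)) (fa_gen (GV (s e)))) (fa_gen (GS e)) | e. True}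
   \<union> {fa_diff (fa_mult (fa_gen (GS e)) (fa_gen (GE f))) (if e = f then fa_gen (GV (r e)) else fa_zero) | e f. True}
   \<union> {fa_diff (fa_gen (GV v)) (fa_sum {e. s e = v} ee_star) | v. regular s v}"

definition lpa_ideal :: "('e \<Rightarrow> 'v) \<Rightarrow> ('e \<Rightarrow> 'v) \<Rightarrow> ('v, 'e, 'k::field) fa set" where
  "lpa_ideal s r = genideal FA (lpa_relations s r)"

text \<open>The Leavitt path algebra L_K(E) as a ring (the K-algebra structure is
given by the central copy of K, i.e. the classes of the constant words c * 1).\<close>

definition LPA :: "('e \<Rightarrow> 'v) \<Rightarrow> ('e \<Rightarrow> 'v) \<Rightarrow> ('v, 'e, 'k::field) fa set ring" where
  "LPA s r = FA Quot (lpa_ideal s r)"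

definition lcls :: "('e \<Rightarrow> 'v) \<Rightarrow> ('e \<Rightarrow> 'v) \<Rightarrow> ('v, 'e, 'k::field) fa \<Rightarrow> ('v, 'e, 'k) fa set" where
  "lcls s r x = a_r_coset FA (lpa_ideal s r) x"

definition lvert :: "('e \<Rightarrow> 'v) \<Rightarrow> ('e \<Rightarrow> 'v) \<Rightarrow> 'v \<Rightarrow> ('v, 'e, 'k::field) fa set" where
  "lvert s r v = lcls s r (fa_gen (GV v))"

definition ledge :: "('e \<Rightarrow> 'v) \<Rightarrow> ('e \<Rightarrow> 'v) \<Rightarrow> 'e \<Rightarrow> ('v, 'e, 'k::field) fa set" where
  "ledge s r e = lcls s r (fa_gen (GE e))"

definition lghost :: "('e \<Rightarrow> 'v) \<Rightarrow> ('e \<Rightarrow> 'v) \<Rightarrow> 'e \<Rightarrow> ('v, 'e, 'k::field) fa set" where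
  "lghost s r e = lcls s r (fa_gen (GS e))"

definition vH :: "('e \<Rightarrow> 'v) \<Rightarrow> ('e \<Rightarrow> 'v) \<Rightarrow> 'v set \<Rightarrow> 'v \<Rightarrow> ('v, 'e, 'k::field) fa set" where
  "vH s r H w = lcls s r (fa_diff (fa_gen (GV w)) (fa_sum {e. s e = w \<and> r e \<notin> H} ee_star))"

definition IHS :: "('e \<Rightarrow> 'v) \<Rightarrow> ('e \<Rightarrow> 'v) \<Rightarrow> 'v set \<Rightarrow> 'v set \<Rightarrow> ('v, 'e, 'k::field) fa set set" where
  "IHS s r H S = genideal (LPA s r) (lvert s r ` H \<union> vH s r H ` S)"

text \<open>A word over X^{\<pm>1}: list of (exponent sign, letter); True = x, False = x^{-1}.\<close>

definition reduced_word :: "(bool \<times> 'a) list \<Rightarrow> bool" where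
  "reduced_word ws \<longleftrightarrow> (\<forall>i. Suc i < length ws \<longrightarrow>
      \<not> (snd (ws ! i) = snd (ws ! Suc i) \<and> fst (ws ! i) \<noteq> fst (ws ! Suc i)))"

definition word_eval :: "('a, 'b) monoid_scheme \<Rightarrow> (bool \<times> 'a) list \<Rightarrow> 'a" where
  "word_eval G ws = foldr (\<lambda>(b, x) acc. monoid.mult G (if b then x else m_inv G x) acc) ws (one G)"

definition free_basis :: "('a, 'b) monoid_scheme \<Rightarrow> 'a set \<Rightarrow> bool" where
  "free_basis G B \<longleftrightarrow> B \<subseteq> carrier G \<and> generate G B = carrier G \<and>
     (\<forall>ws. ws \<noteq> [] \<and> set (map snd ws) \<subseteq> B \<and> reduced_word ws \<longrightarrow> word_eval G ws \<noteq> one G)"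

definition is_free_group :: "('a, 'b) monoid_scheme \<Rightarrow> bool" where
  "is_free_group G \<longleftrightarrow> group G \<and> (\<exists>B. free_basis G B)"

definition is_cyclic :: "('a, 'b) monoid_scheme \<Rightarrow> bool" where
  "is_cyclic G \<longleftrightarrow> (\<exists>g\<in>carrier G. generate G {g} = carrier G)"

end

theory Submission
  imports Defs
begin

lemma fa_mult_closed:
  assumes "f \<in> fa_carrier" "g \<in> fa_carrier"
  shows "fa_mult f g \<in> fa_carrier"
proof -
  let ?S = "(\<lambda>(u,v). u @ v) ` ({w. f w \<noteq> 0} \<times> {w. g w \<noteq> 0})"
  have "{x. fa_mult f g x \<noteq> 0} \<subseteq> ?S"
  proof
    fix x assume "x \<in> {x. fa_mult f g x \<noteq> 0}"
    then have "(\<Sum>i\<le>length x. f (take i x) * g (drop i x)) \<noteq> 0"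
      unfolding fa_mult_def by simp
    then obtain i where "f (take i x) * g (drop i x) \<noteq> 0"
      by (meson sum.not_neutral_contains_not_neutral)
    then have "f (take i x) \<noteq> 0" "g (drop i x) \<noteq> 0" by auto
    then show "x \<in> ?S" by (auto intro!: image_eqI[of _ _ "(take i x, drop i x)"])
  qed
  moreover have "finite ?S" using assms by (auto simp: fa_carrier_def)
  ultimately show ?thesis unfolding fa_carrier_def by (auto intro: finite_subset)
qed

lemma tri_sum:
  fixes F :: "nat \<Rightarrow> nat \<Rightarrow> 'a::comm_monoid_add"
  shows "(\<Sum>i\<le>n. \<Sum>j\<le>i. F j i) = (\<Sum>j\<le>n. \<Sum>k\<le>n-j. F j (j+k))"
proof (induction n)
  case 0 then show ?case by simp
next
  case (Suc n)
  have "(\<Sum>j\<le>Suc n. \<Sum>k\<le>Suc n-j. F j (j+k)) =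
        (\<Sum>j\<le>n. \<Sum>k\<le>Suc n-j. F j (j+k)) + F (Suc n) (Suc n)" by simp
  also have "(\<Sum>j\<le>n. \<Sum>k\<le>Suc n-j. F j (j+k)) = (\<Sum>j\<le>n. (\<Sum>k\<le>n-j. F j (j+k)) + F j (Suc n))"
  proof (rule sum.cong[OF refl])
    fix j assume "j \<in> {..n}"
    then have "Suc n - j = Suc (n - j)" by auto
    then show "(\<Sum>k\<le>Suc n-j. F j (j+k)) = (\<Sum>k\<le>n-j. F j (j+k)) + F j (Suc n)"
      using \<open>j \<in> {..n}\<close> by simp
  qed
  finally show ?case using Suc by (simp add: sum.distrib add.assoc)
qed

lemma fa_mult_assoc:
  "fa_mult (fa_mult f g) h = fa_mult f (fa_mult g (h :: ('v,'e,'k::field) fa))"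
proof
  fix x :: "('v,'e) gen list"
  let ?n = "length x"
  have "fa_mult (fa_mult f g) h x = (\<Sum>i\<le>?n. \<Sum>j\<le>i. f (take j x) * g (take (i-j) (drop j x)) * h (drop i x))"
    unfolding fa_mult_def sum_distrib_right
    by (intro sum.cong refl) (auto simp: min_def drop_take)
  also have "\<dots> = (\<Sum>j\<le>?n. \<Sum>k\<le>?n-j. f (take j x) * g (take (j+k-j) (drop j x)) * h (drop (j+k) x))"
    by (rule tri_sum)
  also have "\<dots> = fa_mult f (fa_mult g h) x"
    unfolding fa_mult_def by (simp add: sum_distrib_left mult.assoc add.commute)
  finally show "fa_mult (fa_mult f g) h x = fa_mult f (fa_mult g h) x" .
qed

lemma fa_one_mult: "fa_mult fa_one f = (f :: ('v,'e,'k::field) fa)"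
proof
  fix x :: "('v,'e) gen list"
  show "fa_mult fa_one f x = f x"
    unfolding fa_mult_def fa_one_def
    by (subst sum.atMost_shift) (auto simp: sum.neutral)
qed

lemma fa_mult_one: "fa_mult f fa_one = (f :: ('v,'e,'k::field) fa)"
proof
  fix x :: "('v,'e) gen list"
  have "fa_mult f fa_one x = (\<Sum>i\<in>{length x}. f (take i x) * (if drop i x = [] then 1 else 0))"
    unfolding fa_mult_def fa_one_def by (rule sum.mono_neutral_right) auto
  then show "fa_mult f fa_one x = f x" by simp
qed

lemma fa_one_carrier: "(fa_one :: ('v,'e,'k::field) fa) \<in> fa_carrier"
proof -
  have "{w. (fa_one :: ('v,'e,'k::field) fa) w \<noteq> 0} = {[]}" by (auto simp: fa_one_def)
  then show ?thesis by (simp add: fa_carrier_def)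
qed

lemma ring_FA: "ring (FA :: ('v,'e,'k::field) fa ring)"
proof (rule ringI)
  show "abelian_group (FA :: ('v,'e,'k::field) fa ring)"
  proof (rule abelian_groupI)
    fix x y :: "('v,'e,'k) fa" assume "x \<in> carrier FA" "y \<in> carrier FA"
    then show "x \<oplus>\<^bsub>FA\<^esub> y \<in> carrier FA"
      unfolding FA_def fa_carrier_def fa_add_def
      by simp (rule finite_subset[of _ "{w. x w \<noteq> 0} \<union> {w. y w \<noteq> 0}"], auto)
  next
    show "\<zero>\<^bsub>FA\<^esub> \<in> carrier (FA :: ('v,'e,'k::field) fa ring)" by (simp add: FA_def fa_carrier_def fa_zero_def)
  next
    fix x y z :: "('v,'e,'k) fa"
    show "(x \<oplus>\<^bsub>FA\<^esub> y) \<oplus>\<^bsub>FA\<^esub> z = x \<oplus>\<^bsub>FA\<^esub> (y \<oplus>\<^bsub>FA\<^esub> z)" by (simp add: FA_def fa_add_def add.assoc)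
  next
    fix x y :: "('v,'e,'k) fa"
    show "x \<oplus>\<^bsub>FA\<^esub> y = y \<oplus>\<^bsub>FA\<^esub> x" by (simp add: FA_def fa_add_def add.commute)
  next
    fix x :: "('v,'e,'k) fa"
    show "\<zero>\<^bsub>FA\<^esub> \<oplus>\<^bsub>FA\<^esub> x = x" by (simp add: FA_def fa_add_def fa_zero_def)
  next
    fix x :: "('v,'e,'k) fa" assume "x \<in> carrier FA"
    then show "\<exists>y\<in>carrier FA. y \<oplus>\<^bsub>FA\<^esub> x = \<zero>\<^bsub>FA\<^esub>"
      by (intro bexI[of _ "\<lambda>w. - x w"]) (auto simp: FA_def fa_add_def fa_zero_def fa_carrier_def)
  qed
next
  show "monoid (FA :: ('v,'e,'k::field) fa ring)"
    by (rule monoidI) (auto simp: FA_def fa_mult_closed fa_mult_assoc fa_one_mult fa_mult_one fa_one_carrier)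
next
  fix x y z :: "('v,'e,'k) fa"
  show "(x \<oplus>\<^bsub>FA\<^esub> y) \<otimes>\<^bsub>FA\<^esub> z = x \<otimes>\<^bsub>FA\<^esub> z \<oplus>\<^bsub>FA\<^esub> y \<otimes>\<^bsub>FA\<^esub> z"
    by (simp add: FA_def fa_add_def fa_mult_def distrib_right sum.distrib)
  show "z \<otimes>\<^bsub>FA\<^esub> (x \<oplus>\<^bsub>FA\<^esub> y) = z \<otimes>\<^bsub>FA\<^esub> x \<oplus>\<^bsub>FA\<^esub> z \<otimes>\<^bsub>FA\<^esub> y"
    by (simp add: FA_def fa_add_def fa_mult_def distrib_left sum.distrib)
qed

context
  fixes s r :: "'e \<Rightarrow> 'v" and w :: 'v
begin

definition src :: "'e list \<Rightarrow> 'v" where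
  "src \<mu> = (case \<mu> of [] \<Rightarrow> w | e # _ \<Rightarrow> s e)"

lemma src_Nil[simp]: "src [] = w" and src_Cons[simp]: "src (e # \<mu>) = s e"
  by (simp_all add: src_def)

fun valid :: "'e list \<Rightarrow> bool" where
  "valid [] = True"
| "valid (e # \<mu>) = (r e = src \<mu> \<and> valid \<mu>)"

fun sel :: "('v,'e) gen \<Rightarrow> 'e list \<Rightarrow> 'e list option" where
  "sel (GV v) \<nu> = (if valid \<nu> \<and> src \<nu> = v then Some \<nu> else None)"
| "sel (GE e) \<nu> = (case \<nu> of [] \<Rightarrow> None | e' # \<mu> \<Rightarrow> if e' = e \<and> valid \<nu> then Some \<mu> else None)"
| "sel (GS e) \<nu> = (if valid \<nu> \<and> r e = src \<nu> then Some (e # \<nu>) else None)"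

fun selw :: "('v,'e) gen list \<Rightarrow> 'e list \<Rightarrow> 'e list option" where
  "selw [] \<nu> = Some \<nu>"
| "selw (g # u) \<nu> = Option.bind (sel g \<nu>) (selw u)"

definition act :: "('v,'e) gen list \<Rightarrow> ('e list \<Rightarrow> 'k::field) \<Rightarrow> 'e list \<Rightarrow> 'k" where
  "act u \<phi> \<nu> = (case selw u \<nu> of None \<Rightarrow> 0 | Some \<nu>' \<Rightarrow> \<phi> \<nu>')"

definition rho :: "('v,'e,'k::field) fa \<Rightarrow> ('e list \<Rightarrow> 'k) \<Rightarrow> 'e list \<Rightarrow> 'k" where
  "rho f \<phi> \<nu> = (\<Sum>u\<in>{u. f u \<noteq> 0}. f u * act u \<phi> \<nu>)"

lemma selw_append: "selw (u @ v) \<nu> = Option.bind (selw u \<nu>) (selw v)"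
  by (induction u arbitrary: \<nu>) (auto split: Option.bind_splits)

lemma act_append: "act (u @ v) \<phi> = act u (act v \<phi>)"
  by (auto simp: act_def selw_append fun_eq_iff split: option.splits Option.bind_splits)

lemma act_lin: "act u (\<lambda>\<nu>. \<Sum>i\<in>A. c i * \<psi> i \<nu>) \<nu> = (\<Sum>i\<in>A. c i * act u (\<psi> i) \<nu>)"
  by (auto simp: act_def split: option.splits)

lemma rho_superset:
  assumes "finite A" "{u. f u \<noteq> 0} \<subseteq> A"
  shows "rho f \<phi> \<nu> = (\<Sum>u\<in>A. f u * act u \<phi> \<nu>)"
  unfolding rho_def using assms by (intro sum.mono_neutral_left) auto

lemma rho_add:
  assumes "f \<in> fa_carrier" "g \<in> fa_carrier"
  shows "rho (fa_add f g) \<phi> \<nu> = rho f \<phi> \<nu> + rho g \<phi> \<nu>"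
proof -
  let ?A = "{u. f u \<noteq> 0} \<union> {u. g u \<noteq> 0}"
  have fin: "finite ?A" using assms by (auto simp: fa_carrier_def)
  have "rho (fa_add f g) \<phi> \<nu> = (\<Sum>u\<in>?A. fa_add f g u * act u \<phi> \<nu>)"
    by (rule rho_superset[OF fin]) (auto simp: fa_add_def)
  also have "\<dots> = (\<Sum>u\<in>?A. f u * act u \<phi> \<nu>) + (\<Sum>u\<in>?A. g u * act u \<phi> \<nu>)"
    by (simp add: fa_add_def distrib_right sum.distrib)
  also have "\<dots> = rho f \<phi> \<nu> + rho g \<phi> \<nu>"
    using rho_superset[OF fin, of f] rho_superset[OF fin, of g] by auto
  finally show ?thesis .
qed

lemma rho_diff:
  assumes "f \<in> fa_carrier" "g \<in> fa_carrier"
  shows "rho (fa_diff f g) \<phi> \<nu> = rho f \<phi> \<nu> - rho g \<phi> \<nu>"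
proof -
  let ?A = "{u. f u \<noteq> 0} \<union> {u. g u \<noteq> 0}"
  have fin: "finite ?A" using assms by (auto simp: fa_carrier_def)
  have "rho (fa_diff f g) \<phi> \<nu> = (\<Sum>u\<in>?A. fa_diff f g u * act u \<phi> \<nu>)"
    by (rule rho_superset[OF fin]) (auto simp: fa_diff_def)
  also have "\<dots> = (\<Sum>u\<in>?A. f u * act u \<phi> \<nu>) - (\<Sum>u\<in>?A. g u * act u \<phi> \<nu>)"
    by (simp add: fa_diff_def left_diff_distrib sum_subtractf)
  also have "\<dots> = rho f \<phi> \<nu> - rho g \<phi> \<nu>"
    using rho_superset[OF fin, of f] rho_superset[OF fin, of g] by auto
  finally show ?thesis .
qed

lemma rho_zero: "rho fa_zero \<phi> \<nu> = 0"
  by (simp add: rho_def fa_zero_def)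

lemma rho_one: "rho fa_one \<phi> \<nu> = \<phi> \<nu>"
proof -
  have "rho fa_one \<phi> \<nu> = (\<Sum>u\<in>{[]}. fa_one u * act u \<phi> \<nu>)"
    by (rule rho_superset) (auto simp: fa_one_def split: if_splits)
  then show ?thesis by (simp add: fa_one_def act_def)
qed

lemma rho_gen: "rho (fa_gen g) \<phi> \<nu> = act [g] \<phi> \<nu>"
proof -
  have "rho (fa_gen g) \<phi> \<nu> = (\<Sum>u\<in>{[g]}. fa_gen g u * act u \<phi> \<nu>)"
    by (rule rho_superset) (auto simp: fa_gen_def split: if_splits)
  then show ?thesis by (simp add: fa_gen_def)
qed

lemma conv_pairs:
  assumes "finite A" "finite B" "{u. f u \<noteq> 0} \<subseteq> A" "{u. g u \<noteq> 0} \<subseteq> B"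
  shows "fa_mult f g x = (\<Sum>p\<in>{p\<in>A \<times> B. fst p @ snd p = x}. f (fst p) * (g (snd p) :: 'k::field))"
proof -
  let ?h = "\<lambda>i. (take i x, drop i x)"
  have inj: "inj_on ?h {..length x}" by (rule inj_onI) (metis atMost_iff length_take min.absorb2 prod.inject)
  have img: "?h ` {..length x} = {p. fst p @ snd p = x}"
  proof
    show "{p. fst p @ snd p = x} \<subseteq> ?h ` {..length x}"
    proof
      fix p assume "p \<in> {p. fst p @ snd p = x}"
      then have "p = ?h (length (fst p))" by (cases p) auto
      moreover have "length (fst p) \<in> {..length x}" using \<open>p \<in> _\<close> by auto
      ultimately show "p \<in> ?h ` {..length x}" by blast
    qed
  qed auto
  have "fa_mult f g x = (\<Sum>p\<in>?h ` {..length x}. f (fst p) * g (snd p))"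
    unfolding fa_mult_def by (subst sum.reindex[OF inj]) simp
  also have "\<dots> = (\<Sum>p\<in>{p. fst p @ snd p = x}. f (fst p) * g (snd p))" using img by simp
  also have "\<dots> = (\<Sum>p\<in>{p\<in>A \<times> B. fst p @ snd p = x}. f (fst p) * g (snd p))"
  proof (rule sum.mono_neutral_right)
    show "finite {p. fst p @ snd p = x}" using img finite_imageI by (metis finite_atMost)
    show "{p\<in>A \<times> B. fst p @ snd p = x} \<subseteq> {p. fst p @ snd p = x}" by auto
    show "\<forall>i\<in>{p. fst p @ snd p = x} - {p \<in> A \<times> B. fst p @ snd p = x}. f (fst i) * g (snd i) = 0"
      using assms(3,4) by auto
  qed
  finally show ?thesis .
qed

lemma rho_mult:
  assumes "f \<in> fa_carrier" "g \<in> fa_carrier"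
  shows "rho (fa_mult f g) \<phi> \<nu> = rho f (rho g \<phi>) \<nu>"
proof -
  let ?A = "{u. f u \<noteq> 0}" and ?B = "{u. g u \<noteq> 0}"
  let ?S = "(\<lambda>p. fst p @ snd p) ` (?A \<times> ?B)"
  have fA: "finite ?A" and fB: "finite ?B" using assms by (auto simp: fa_carrier_def)
  have fS: "finite ?S" using fA fB by auto
  have supp: "{u. fa_mult f g u \<noteq> 0} \<subseteq> ?S"
  proof
    fix x assume "x \<in> {u. fa_mult f g u \<noteq> 0}"
    then have "(\<Sum>p\<in>{p\<in>?A \<times> ?B. fst p @ snd p = x}. f (fst p) * g (snd p)) \<noteq> 0"
      using conv_pairs[OF fA fB order_refl order_refl] by auto
    then obtain p where "p \<in> {p\<in>?A \<times> ?B. fst p @ snd p = x}"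
      by (meson sum.not_neutral_contains_not_neutral)
    then show "x \<in> ?S" by auto
  qed
  have "rho (fa_mult f g) \<phi> \<nu> = (\<Sum>x\<in>?S. fa_mult f g x * act x \<phi> \<nu>)"
    by (rule rho_superset[OF fS supp])
  also have "\<dots> = (\<Sum>x\<in>?S. \<Sum>p\<in>{p\<in>?A \<times> ?B. fst p @ snd p = x}. f (fst p) * g (snd p) * act (fst p @ snd p) \<phi> \<nu>)"
    by (simp add: conv_pairs[OF fA fB order_refl order_refl] sum_distrib_right)
  also have "\<dots> = (\<Sum>p\<in>?A \<times> ?B. f (fst p) * g (snd p) * act (fst p @ snd p) \<phi> \<nu>)"
    by (rule sum.group) (use fA fB in auto)
  also have "\<dots> = (\<Sum>u\<in>?A. \<Sum>v\<in>?B. f u * (g v * act u (act v \<phi>) \<nu>))"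
    by (simp add: sum.cartesian_product act_append mult.assoc case_prod_beta)
  also have "\<dots> = rho f (rho g \<phi>) \<nu>"
    unfolding rho_def by (simp add: act_lin sum_distrib_left)
  finally show ?thesis .
qed

end

lemma fa_gen_carrier: "(fa_gen g :: ('v,'e,'k::field) fa) \<in> fa_carrier"
proof -
  have "{w. (fa_gen g :: ('v,'e,'k::field) fa) w \<noteq> 0} = {[g]}" by (auto simp: fa_gen_def)
  then show ?thesis by (simp add: fa_carrier_def)
qed

lemma fa_zero_carrier: "fa_zero \<in> fa_carrier"
  by (simp add: fa_zero_def fa_carrier_def)

lemma fa_add_carrier: "f \<in> fa_carrier \<Longrightarrow> g \<in> fa_carrier \<Longrightarrow> fa_add f g \<in> fa_carrier"
  unfolding fa_carrier_def fa_add_def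
  by simp (rule finite_subset[of _ "{w. f w \<noteq> 0} \<union> {w. g w \<noteq> 0}"], auto)

lemma fa_diff_carrier: "f \<in> fa_carrier \<Longrightarrow> g \<in> fa_carrier \<Longrightarrow> fa_diff f g \<in> fa_carrier"
  unfolding fa_carrier_def fa_diff_def
  by simp (rule finite_subset[of _ "{w. f w \<noteq> 0} \<union> {w. g w \<noteq> 0}"], auto)

lemma fa_sum_carrier:
  assumes "finite A" "\<And>i. i \<in> A \<Longrightarrow> g i \<in> fa_carrier"
  shows "fa_sum A g \<in> fa_carrier"
  unfolding fa_carrier_def fa_sum_def
proof (simp, rule finite_subset[of _ "\<Union>i\<in>A. {w. g i w \<noteq> 0}"])
  show "{w. (\<Sum>i\<in>A. g i w) \<noteq> 0} \<subseteq> (\<Union>i\<in>A. {w. g i w \<noteq> 0})"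
    by (auto dest: sum.not_neutral_contains_not_neutral)
  show "finite (\<Union>i\<in>A. {w. g i w \<noteq> 0})" using assms by (auto simp: fa_carrier_def)
qed

lemma ee_star_carrier: "ee_star e \<in> fa_carrier"
  unfolding ee_star_def by (intro fa_mult_closed fa_gen_carrier)

lemma rel_carrier: "lpa_relations s r \<subseteq> (fa_carrier :: ('v,'e,'k::field) fa set)"
  unfolding lpa_relations_def regular_def
  by (auto intro!: fa_diff_carrier fa_mult_closed fa_gen_carrier fa_zero_carrier fa_sum_carrier ee_star_carrier)

context
  fixes s r :: "'e \<Rightarrow> 'v" and w :: 'v
begin

lemma rho_sum:
  assumes "finite A" "\<And>i. i \<in> A \<Longrightarrow> g i \<in> fa_carrier"
  shows "rho s r w (fa_sum A g) \<phi> \<nu> = (\<Sum>i\<in>A. rho s r w (g i) \<phi> \<nu>)"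
proof -
  let ?U = "\<Union>i\<in>A. {w. g i w \<noteq> 0}"
  have fU: "finite ?U" using assms by (auto simp: fa_carrier_def)
  have "rho s r w (fa_sum A g) \<phi> \<nu> = (\<Sum>u\<in>?U. fa_sum A g u * act s r w u \<phi> \<nu>)"
    by (rule rho_superset[OF fU]) (auto simp: fa_sum_def dest: sum.not_neutral_contains_not_neutral)
  also have "\<dots> = (\<Sum>i\<in>A. \<Sum>u\<in>?U. g i u * act s r w u \<phi> \<nu>)"
    by (simp add: fa_sum_def sum_distrib_right sum.swap[of _ A])
  also have "\<dots> = (\<Sum>i\<in>A. rho s r w (g i) \<phi> \<nu>)"
    by (rule sum.cong[OF refl], rule rho_superset[OF fU, symmetric]) auto
  finally show ?thesis .
qed

lemma rho_gen2: "rho s r w (fa_mult (fa_gen a) (fa_gen b)) \<phi> \<nu> = act s r w [a, b] \<phi> \<nu>"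
proof -
  have "rho s r w (fa_gen b) \<phi> = act s r w [b] \<phi>" by (rule ext) (rule rho_gen)
  then have "rho s r w (fa_mult (fa_gen a) (fa_gen b)) \<phi> \<nu> = act s r w [a] (act s r w [b] \<phi>) \<nu>"
    by (simp add: rho_mult fa_gen_carrier rho_gen)
  also have "\<dots> = act s r w ([a] @ [b]) \<phi> \<nu>" by (simp only: act_append)
  finally show ?thesis by simp
qed

lemma rho_rel:
  assumes nreg: "\<not> regular s w" and x: "x \<in> lpa_relations s r"
  shows "rho s r w x \<phi> \<nu> = (0 :: 'k::field)"
proof -
  have gc: "\<And>g. (fa_gen g :: ('v,'e,'k) fa) \<in> fa_carrier" by (rule fa_gen_carrier)
  have mc: "\<And>a b. fa_mult (fa_gen a) (fa_gen b) \<in> (fa_carrier :: ('v,'e,'k) fa set)"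
    by (intro fa_mult_closed fa_gen_carrier)
  note rd = rho_diff[OF mc] rho_diff[OF mc fa_zero_carrier] rho_diff[OF mc gc]
  note sm = rd rho_gen2 rho_gen rho_zero act_def
  from x show ?thesis
    unfolding lpa_relations_def
  proof (elim UnE CollectE exE conjE)
    fix v v' assume "x = fa_diff (fa_mult (fa_gen (GV v)) (fa_gen (GV v'))) (if v = v' then fa_gen (GV v) else fa_zero)"
    then show ?thesis by (cases "v = v'") (simp_all add: sm)
  next
    fix e assume "x = fa_diff (fa_mult (fa_gen (GV (s e))) (fa_gen (GE e))) (fa_gen (GE e))"
    then show ?thesis by (cases \<nu>) (auto simp: sm)
  next
    fix e assume "x = fa_diff (fa_mult (fa_gen (GE e)) (fa_gen (GV (r e)))) (fa_gen (GE e))"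
    then show ?thesis by (cases \<nu>) (auto simp: sm)
  next
    fix e assume "x = fa_diff (fa_mult (fa_gen (GV (r e))) (fa_gen (GS e))) (fa_gen (GS e))"
    then show ?thesis by (cases \<nu>) (auto simp: sm)
  next
    fix e assume "x = fa_diff (fa_mult (fa_gen (GS e)) (fa_gen (GV (s e)))) (fa_gen (GS e))"
    then show ?thesis by (cases \<nu>) (auto simp: sm)
  next
    fix e f assume "x = fa_diff (fa_mult (fa_gen (GS e)) (fa_gen (GE f))) (if e = f then fa_gen (GV (r e)) else fa_zero)"
    then show ?thesis by (cases \<nu>) (auto simp: sm)
  next
    fix v assume xv: "x = fa_diff (fa_gen (GV v)) (fa_sum {e. s e = v} ee_star)" and rv: "regular s v"
    then have fin: "finite {e. s e = v}" by (simp add: regular_def)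
    have vw: "v \<noteq> w" using rv nreg by auto
    have "rho s r w (fa_sum {e. s e = v} ee_star) \<phi> \<nu> = (\<Sum>e\<in>{e. s e = v}. act s r w [GE e, GS e] \<phi> \<nu>)"
      using rho_sum[of "{e. s e = v}" ee_star, OF fin ee_star_carrier] by (simp add: ee_star_def rho_gen2)
    also have "\<dots> = rho s r w (fa_gen (GV v)) \<phi> \<nu>"
    proof (cases \<nu>)
      case Nil then show ?thesis using vw by (simp add: sm)
    next
      case (Cons e0 \<mu>)
      have "(\<Sum>e\<in>{e. s e = v}. act s r w [GE e, GS e] \<phi> \<nu>) =
            (\<Sum>e\<in>{e. s e = v}. if e = e0 then (if valid s r w \<nu> then \<phi> \<nu> else 0) else 0)"
        by (rule sum.cong) (auto simp: Cons sm)
      also have "\<dots> = (if s e0 = v then (if valid s r w \<nu> then \<phi> \<nu> else 0) else 0)"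
        using fin by (simp add: sum.delta')
      finally show ?thesis by (auto simp: Cons sm)
    qed
    finally show ?thesis using xv
      by (simp add: rho_diff[OF gc fa_sum_carrier[OF fin ee_star_carrier]])
  qed
qed

end

definition Kset :: "('e \<Rightarrow> 'v) \<Rightarrow> ('e \<Rightarrow> 'v) \<Rightarrow> 'v \<Rightarrow> ('v,'e,'k::field) fa set" where
  "Kset s r w = {x \<in> fa_carrier. \<forall>\<phi> \<nu>. rho s r w x \<phi> \<nu> = 0}"

lemma FA_simps: "carrier FA = fa_carrier" "monoid.mult FA = fa_mult" "ring.add FA = fa_add" "monoid.one FA = fa_one" "ring.zero FA = fa_zero"
  by (simp_all add: FA_def)

lemma Kset_ideal: "ideal (Kset s r w :: ('v,'e,'k::field) fa set) FA"
proof -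
  interpret R: ring "FA :: ('v,'e,'k) fa ring" by (rule ring_FA)
  have sub: "Kset s r w \<subseteq> carrier (FA :: ('v,'e,'k) fa ring)" by (auto simp: Kset_def FA_simps)
  have add: "a \<oplus>\<^bsub>(FA::('v,'e,'k) fa ring)\<^esub> b \<in> Kset s r w" if "a \<in> Kset s r w" "b \<in> Kset s r w" for a b
    using that by (auto simp: Kset_def FA_simps fa_add_carrier rho_add)
  show ?thesis
  proof (rule idealI[OF ring_FA])
    show "subgroup (Kset s r w) (add_monoid (FA :: ('v,'e,'k) fa ring))"
    proof (rule R.add.subgroupI[OF sub])
      show "Kset s r w \<noteq> {}" using rho_zero[of s r w] fa_zero_carrier by (auto simp: Kset_def)
    next
      fix a :: "('v,'e,'k) fa" assume a: "a \<in> Kset s r w"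
      then have ac: "a \<in> carrier (FA::('v,'e,'k) fa ring)" using sub by auto
      have "rho s r w (\<ominus>\<^bsub>(FA::('v,'e,'k) fa ring)\<^esub> a) \<phi> \<nu> = 0" for \<phi> \<nu>
      proof -
        have "rho s r w (a \<oplus>\<^bsub>(FA::('v,'e,'k) fa ring)\<^esub> (\<ominus>\<^bsub>(FA::('v,'e,'k) fa ring)\<^esub> a)) \<phi> \<nu> = 0" using R.r_neg[OF ac] rho_zero by (simp add: FA_simps)
        then show ?thesis using a R.a_inv_closed[OF ac]
          by (simp add: FA_simps rho_add Kset_def)
      qed
      then show "\<ominus>\<^bsub>(FA::('v,'e,'k) fa ring)\<^esub> a \<in> Kset s r w" using R.a_inv_closed[OF ac] by (simp add: Kset_def FA_simps)
    next
      fix a b :: "('v,'e,'k) fa" assume "a \<in> Kset s r w" "b \<in> Kset s r w" then show "a \<oplus>\<^bsub>(FA::('v,'e,'k) fa ring)\<^esub> b \<in> Kset s r w" by (rule add)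
    qed
  next
    fix a x :: "('v,'e,'k) fa" assume "a \<in> Kset s r w" "x \<in> carrier (FA::('v,'e,'k) fa ring)"
    then show "x \<otimes>\<^bsub>(FA::('v,'e,'k) fa ring)\<^esub> a \<in> Kset s r w"
    proof (auto simp: Kset_def FA_simps fa_mult_closed rho_mult)
      fix \<phi> \<nu> assume "\<forall>\<phi> \<nu>. rho s r w a \<phi> \<nu> = 0"
      then have "rho s r w a \<phi> = (\<lambda>_. 0)" by auto
      then show "rho s r w x (rho s r w a \<phi>) \<nu> = 0"
      proof -
        have "\<And>u. act s r w u (\<lambda>_. 0) \<nu> = (0::'k)" by (simp add: act_def split: option.split)
        then show ?thesis using \<open>rho s r w a \<phi> = (\<lambda>_. 0)\<close> by (simp add: rho_def)
      qed
    qed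
  next
    fix a x :: "('v,'e,'k) fa" assume "a \<in> Kset s r w" "x \<in> carrier (FA::('v,'e,'k) fa ring)"
    then show "a \<otimes>\<^bsub>(FA::('v,'e,'k) fa ring)\<^esub> x \<in> Kset s r w"
      by (auto simp: Kset_def FA_simps fa_mult_closed rho_mult)
  qed
qed

lemma lpa_ideal_ideal: "ideal (lpa_ideal s r :: ('v,'e,'k::field) fa set) FA"
  unfolding lpa_ideal_def
  by (rule ring.genideal_ideal[OF ring_FA]) (simp add: FA_simps rel_carrier)

lemma lpa_ideal_Kset:
  assumes "\<not> regular s w"
  shows "lpa_ideal s r \<subseteq> (Kset s r w :: ('v,'e,'k::field) fa set)"
  unfolding lpa_ideal_def
proof (rule ring.genideal_minimal[OF ring_FA Kset_ideal])
  show "lpa_relations s r \<subseteq> (Kset s r w :: ('v,'e,'k::field) fa set)"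
    using rel_carrier rho_rel[OF assms] by (auto simp: Kset_def)
qed

lemma FA_inv: "f \<in> fa_carrier \<Longrightarrow> \<ominus>\<^bsub>FA\<^esub> f = (\<lambda>w. - f w :: 'k::field)"
proof -
  interpret R: ring "FA :: ('v,'e,'k) fa ring" by (rule ring_FA)
  assume fc: "f \<in> fa_carrier"
  have mc: "(\<lambda>w. - f w) \<in> fa_carrier" using fc by (simp add: fa_carrier_def)
  show ?thesis
    by (rule R.minus_equality) (use fc mc in \<open>auto simp: FA_simps fa_add_def fa_zero_def\<close>)
qed

lemma FA_minus: "f \<in> fa_carrier \<Longrightarrow> g \<in> fa_carrier \<Longrightarrow> f \<ominus>\<^bsub>FA\<^esub> g = (fa_diff f g :: ('v,'e,'k::field) fa)"
  by (simp add: a_minus_def FA_inv FA_simps fa_add_def fa_diff_def)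

lemma fa_sum_insert: "finite A \<Longrightarrow> e \<notin> A \<Longrightarrow> fa_sum (insert e A) g = fa_add (g e) (fa_sum A g)"
  by (simp add: fa_sum_def fa_add_def)

context
  fixes s r :: "'e \<Rightarrow> 'v"
begin

abbreviation "II \<equiv> (lpa_ideal s r :: ('v,'e,'k::field) fa set)"
abbreviation "LL \<equiv> (LPA s r :: ('v,'e,'k::field) fa set ring)"

lemma ring_LL: "ring LL"
  unfolding LPA_def by (rule ideal.quotient_is_ring[OF lpa_ideal_ideal])

lemma pi_hom: "(\<lambda>x. II +>\<^bsub>FA\<^esub> x) \<in> ring_hom FA LL"
  unfolding LPA_def by (rule ideal.rcos_ring_hom[OF lpa_ideal_ideal])

lemma lcls_eq: "lcls s r x = II +>\<^bsub>FA\<^esub> x"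
  by (simp add: lcls_def)

lemma pi_mult: "x \<in> fa_carrier \<Longrightarrow> y \<in> fa_carrier \<Longrightarrow> II +>\<^bsub>FA\<^esub> (fa_mult x y) = (II +>\<^bsub>FA\<^esub> x) \<otimes>\<^bsub>LL\<^esub> (II +>\<^bsub>FA\<^esub> y)"
  using ring_hom_mult[OF pi_hom, of x y] by (simp add: FA_simps)

lemma pi_add: "x \<in> fa_carrier \<Longrightarrow> y \<in> fa_carrier \<Longrightarrow> II +>\<^bsub>FA\<^esub> (fa_add x y) = (II +>\<^bsub>FA\<^esub> x) \<oplus>\<^bsub>LL\<^esub> (II +>\<^bsub>FA\<^esub> y)"
  using ring_hom_add[OF pi_hom, of x y] by (simp add: FA_simps)

lemma pi_one: "II +>\<^bsub>FA\<^esub> fa_one = \<one>\<^bsub>LL\<^esub>"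
  using ring_hom_one[OF pi_hom] by (simp add: FA_simps)

lemma pi_zero: "II +>\<^bsub>FA\<^esub> fa_zero = \<zero>\<^bsub>LL\<^esub>"
  using ring_hom_zero[OF pi_hom ring_FA ring_LL] by (simp add: FA_simps)

lemma pi_closed: "x \<in> fa_carrier \<Longrightarrow> II +>\<^bsub>FA\<^esub> x \<in> carrier LL"
  using ring_hom_closed[OF pi_hom, of x] by (simp add: FA_simps)

lemma pi_diff: "x \<in> fa_carrier \<Longrightarrow> y \<in> fa_carrier \<Longrightarrow> II +>\<^bsub>FA\<^esub> (fa_diff x y) = (II +>\<^bsub>FA\<^esub> x) \<ominus>\<^bsub>LL\<^esub> (II +>\<^bsub>FA\<^esub> y)"
proof -
  interpret L: ring LL by (rule ring_LL)
  assume xc: "x \<in> fa_carrier" and yc: "y \<in> fa_carrier"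
  have dc: "fa_diff x y \<in> fa_carrier" using xc yc by (rule fa_diff_carrier)
  have "fa_add (fa_diff x y) y = x" by (simp add: fa_add_def fa_diff_def)
  then have eq: "(II +>\<^bsub>FA\<^esub> (fa_diff x y)) \<oplus>\<^bsub>LL\<^esub> (II +>\<^bsub>FA\<^esub> y) = II +>\<^bsub>FA\<^esub> x"
    using pi_add[OF dc yc] by simp
  have P: "II +>\<^bsub>FA\<^esub> (fa_diff x y) \<in> carrier LL" and Y: "II +>\<^bsub>FA\<^esub> y \<in> carrier LL"
    using pi_closed[OF dc] pi_closed[OF yc] by auto
  have "(II +>\<^bsub>FA\<^esub> x) \<ominus>\<^bsub>LL\<^esub> (II +>\<^bsub>FA\<^esub> y) =
     ((II +>\<^bsub>FA\<^esub> (fa_diff x y)) \<oplus>\<^bsub>LL\<^esub> (II +>\<^bsub>FA\<^esub> y)) \<oplus>\<^bsub>LL\<^esub> (\<ominus>\<^bsub>LL\<^esub> (II +>\<^bsub>FA\<^esub> y))"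
    by (simp only: eq a_minus_def)
  also have "\<dots> = (II +>\<^bsub>FA\<^esub> (fa_diff x y)) \<oplus>\<^bsub>LL\<^esub> ((II +>\<^bsub>FA\<^esub> y) \<oplus>\<^bsub>LL\<^esub> (\<ominus>\<^bsub>LL\<^esub> (II +>\<^bsub>FA\<^esub> y)))"
    using P Y by (simp add: L.add.m_assoc)
  also have "\<dots> = II +>\<^bsub>FA\<^esub> (fa_diff x y)" using P Y by (simp add: L.r_neg)
  finally show ?thesis by simp
qed

lemma pi_rel:
  assumes "fa_diff x y \<in> lpa_relations s r" "x \<in> fa_carrier" "y \<in> fa_carrier"
  shows "II +>\<^bsub>FA\<^esub> x = (II +>\<^bsub>FA\<^esub> y :: ('v,'e,'k::field) fa set)"
proof -
  have "fa_diff x y \<in> II"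
    using assms(1) rel_carrier unfolding lpa_ideal_def
    by (intro ring.genideal_self[OF ring_FA, THEN subsetD]) (auto simp: FA_simps)
  moreover have "x \<ominus>\<^bsub>FA\<^esub> y = fa_diff x y" by (rule FA_minus[OF assms(2,3)])
  ultimately have m: "x \<ominus>\<^bsub>FA\<^esub> y \<in> II" by simp
  have xc: "x \<in> carrier FA" and yc: "y \<in> carrier FA" using assms by (simp_all add: FA_simps)
  show ?thesis using m
    by (rule iffD1[OF ring.quotient_eq_iff_same_a_r_cos[OF ring_FA lpa_ideal_ideal[of s r] xc yc]])
qed

lemma pi_sum:
  assumes "finite A" "\<And>i. i \<in> A \<Longrightarrow> g i \<in> fa_carrier"
  shows "II +>\<^bsub>FA\<^esub> (fa_sum A g) = finsum LL (\<lambda>i. II +>\<^bsub>FA\<^esub> (g i)) A"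
  using assms
proof (induction A rule: finite_induct)
  case empty
  interpret L: ring LL by (rule ring_LL)
  have "fa_sum {} g = fa_zero" by (simp add: fa_sum_def fa_zero_def)
  then show ?case by (simp add: pi_zero)
next
  case (insert e A)
  interpret L: ring LL by (rule ring_LL)
  have "II +>\<^bsub>FA\<^esub> (fa_sum (insert e A) g) = (II +>\<^bsub>FA\<^esub> g e) \<oplus>\<^bsub>LL\<^esub> (II +>\<^bsub>FA\<^esub> fa_sum A g)"
    using insert by (simp add: fa_sum_insert pi_add fa_sum_carrier)
  also have "\<dots> = finsum LL (\<lambda>i. II +>\<^bsub>FA\<^esub> (g i)) (insert e A)"
    using insert by (simp add: L.finsum_insert Pi_def pi_closed)
  finally show ?case .
qed

lemma LL_carrier: "Z \<in> carrier LL \<Longrightarrow> \<exists>x. x \<in> fa_carrier \<and> Z = a_r_coset FA II x"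
proof -
  assume "Z \<in> carrier LL"
  then have "Z \<in> (\<Union>a\<in>carrier (add_monoid FA). {II #>\<^bsub>add_monoid FA\<^esub> a})"
    by (simp add: LPA_def FactRing_def A_RCOSETS_def RCOSETS_def)
  then obtain a where "a \<in> carrier (add_monoid FA)" "Z = II #>\<^bsub>add_monoid FA\<^esub> a" by blast
  then show ?thesis by (intro exI[of _ a]) (simp add: a_r_coset_def FA_simps)
qed

end

lemma (in ring) unit_aux0:
  assumes u: "u \<in> carrier R" and uu: "u \<otimes> u = \<zero>"
  shows "(\<one> \<oplus> u) \<otimes> (\<one> \<oplus> \<ominus> u) = \<one>" "(\<one> \<oplus> \<ominus> u) \<otimes> (\<one> \<oplus> u) = \<one>"
proof -
  have "(\<one> \<oplus> u) \<otimes> (\<one> \<oplus> \<ominus> u) = \<one> \<oplus> (u \<oplus> \<ominus> u) \<oplus> \<ominus> (u \<otimes> u)"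
    using u by (simp add: l_distr r_distr r_minus a_assoc minus_add)
  then show "(\<one> \<oplus> u) \<otimes> (\<one> \<oplus> \<ominus> u) = \<one>" using u uu by (simp add: r_neg)
  have "(\<one> \<oplus> \<ominus> u) \<otimes> (\<one> \<oplus> u) = \<one> \<oplus> (\<ominus> u \<oplus> u) \<oplus> \<ominus> (u \<otimes> u)"
    using u by (simp add: l_distr r_distr l_minus a_assoc)
  then show "(\<one> \<oplus> \<ominus> u) \<otimes> (\<one> \<oplus> u) = \<one>" using u uu by (simp add: l_neg)
qed

lemma (in ring) unit_aux:
  assumes z: "z \<in> carrier R" and zz: "z \<otimes> z = \<zero>"
  shows "\<one> \<oplus> (\<one> \<oplus> \<one>) \<otimes> z \<in> Units R"
proof -
  have u: "z \<oplus> z \<in> carrier R" using z by simp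
  have t: "(\<one> \<oplus> \<one>) \<otimes> z = z \<oplus> z" using z by (simp add: l_distr)
  have uu: "(z \<oplus> z) \<otimes> (z \<oplus> z) = \<zero>" using z zz by (simp add: l_distr r_distr)
  show ?thesis unfolding t Units_def using u unit_aux0[OF u uu] by auto
qed

context
  fixes s r :: "'e \<Rightarrow> 'v"
begin

lemma gen2_carrier: "fa_mult (fa_gen a) (fa_gen b) \<in> (fa_carrier :: ('v,'e,'k::field) fa set)"
  by (intro fa_mult_closed fa_gen_carrier)

lemma rel_L:
  assumes "fa_diff (fa_mult (fa_gen a) (fa_gen b)) c \<in> lpa_relations s r" "c \<in> fa_carrier"
  shows "(II s r +>\<^bsub>FA\<^esub> fa_gen a) \<otimes>\<^bsub>LL s r\<^esub> (II s r +>\<^bsub>FA\<^esub> fa_gen b) = (II s r +>\<^bsub>FA\<^esub> c :: ('v,'e,'k::field) fa set)"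
proof -
  have "II s r +>\<^bsub>FA\<^esub> fa_mult (fa_gen a) (fa_gen b) = (II s r +>\<^bsub>FA\<^esub> fa_gen a) \<otimes>\<^bsub>LL s r\<^esub> (II s r +>\<^bsub>FA\<^esub> (fa_gen b :: ('v,'e,'k) fa))"
    by (rule pi_mult[OF fa_gen_carrier fa_gen_carrier])
  then show ?thesis using pi_rel[OF assms(1) gen2_carrier assms(2)] by simp
qed

lemma LR1: "lvert s r v \<otimes>\<^bsub>LL s r\<^esub> lvert s r v' = (if v = v' then lvert s r v else (\<zero>\<^bsub>LL s r\<^esub> :: ('v,'e,'k::field) fa set))"
proof -
  have "fa_diff (fa_mult (fa_gen (GV v)) (fa_gen (GV v'))) (if v = v' then fa_gen (GV v) else fa_zero) \<in> lpa_relations s r"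
    unfolding lpa_relations_def by blast
  from rel_L[OF this] show ?thesis
    by (cases "v = v'") (simp_all add: lvert_def lcls_def fa_gen_carrier fa_zero_carrier pi_zero)
qed

lemma LR2: "lvert s r (s e) \<otimes>\<^bsub>LL s r\<^esub> ledge s r e = (ledge s r e :: ('v,'e,'k::field) fa set)"
proof -
  have "fa_diff (fa_mult (fa_gen (GV (s e))) (fa_gen (GE e))) (fa_gen (GE e)) \<in> lpa_relations s r"
    unfolding lpa_relations_def by blast
  from rel_L[OF this] show ?thesis by (simp add: lvert_def ledge_def lcls_def fa_gen_carrier)
qed

lemma LR3: "ledge s r e \<otimes>\<^bsub>LL s r\<^esub> lvert s r (r e) = (ledge s r e :: ('v,'e,'k::field) fa set)"
proof -
  have "fa_diff (fa_mult (fa_gen (GE e)) (fa_gen (GV (r e)))) (fa_gen (GE e)) \<in> lpa_relations s r"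
    unfolding lpa_relations_def by blast
  from rel_L[OF this] show ?thesis by (simp add: lvert_def ledge_def lcls_def fa_gen_carrier)
qed

lemma LR5: "lghost s r e \<otimes>\<^bsub>LL s r\<^esub> lvert s r (s e) = (lghost s r e :: ('v,'e,'k::field) fa set)"
proof -
  have "fa_diff (fa_mult (fa_gen (GS e)) (fa_gen (GV (s e)))) (fa_gen (GS e)) \<in> lpa_relations s r"
    unfolding lpa_relations_def by blast
  from rel_L[OF this] show ?thesis by (simp add: lvert_def lghost_def lcls_def fa_gen_carrier)
qed

lemma LR4: "lvert s r (r e) \<otimes>\<^bsub>LL s r\<^esub> lghost s r e = (lghost s r e :: ('v,'e,'k::field) fa set)"
proof -
  have "fa_diff (fa_mult (fa_gen (GV (r e))) (fa_gen (GS e))) (fa_gen (GS e)) \<in> lpa_relations s r"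
    unfolding lpa_relations_def by blast
  from rel_L[OF this] show ?thesis by (simp add: lvert_def lghost_def lcls_def fa_gen_carrier)
qed

lemma LR6: "lghost s r e \<otimes>\<^bsub>LL s r\<^esub> ledge s r e' = (if e = e' then lvert s r (r e) else (\<zero>\<^bsub>LL s r\<^esub> :: ('v,'e,'k::field) fa set))"
proof -
  have "fa_diff (fa_mult (fa_gen (GS e)) (fa_gen (GE e'))) (if e = e' then fa_gen (GV (r e)) else fa_zero) \<in> lpa_relations s r"
    unfolding lpa_relations_def by blast
  from rel_L[OF this] show ?thesis
    by (cases "e = e'") (simp_all add: lvert_def ledge_def lghost_def lcls_def fa_gen_carrier fa_zero_carrier pi_zero)
qed

lemma gens_closed:
  "lvert s r v \<in> carrier (LL s r :: ('v,'e,'k::field) fa set ring)"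
  "ledge s r e \<in> carrier (LL s r :: ('v,'e,'k::field) fa set ring)"
  "lghost s r e \<in> carrier (LL s r :: ('v,'e,'k::field) fa set ring)"
  by (simp_all add: lvert_def ledge_def lghost_def lcls_def pi_closed fa_gen_carrier)

lemma vH_L:
  assumes "finite {e. s e = w \<and> r e \<notin> H}"
  shows "vH s r H w = lvert s r w \<ominus>\<^bsub>LL s r\<^esub> (finsum (LL s r) (\<lambda>e. ledge s r e \<otimes>\<^bsub>LL s r\<^esub> lghost s r e) {e. s e = w \<and> r e \<notin> H} :: ('v,'e,'k::field) fa set)"
proof -
  have sc: "fa_sum {e. s e = w \<and> r e \<notin> H} ee_star \<in> (fa_carrier :: ('v,'e,'k::field) fa set)"
    by (rule fa_sum_carrier[OF assms ee_star_carrier])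
  show ?thesis
    unfolding vH_def lcls_def
    by (simp add: pi_diff[OF fa_gen_carrier sc] pi_sum[OF assms ee_star_carrier] ee_star_def pi_mult fa_gen_carrier
        lvert_def ledge_def lghost_def lcls_def)
qed

end

locale lsetup =
  fixes s r :: "'e \<Rightarrow> 'v" and H :: "'v set" and w :: 'v and f :: 'e
  assumes nreg: "\<not> regular s w" and finT: "finite {e. s e = w \<and> r e \<notin> H}"
    and rf: "r f = w" and wH: "w \<notin> H"
begin

abbreviation "T \<equiv> {e. s e = w \<and> r e \<notin> H}"

lemma f_in_T: "f \<in> T \<longleftrightarrow> s f = w" using rf wH by auto

lemma SS_closed: "finsum (LL s r) (\<lambda>e. ledge s r e \<otimes>\<^bsub>LL s r\<^esub> lghost s r e) T \<in> carrier (LL s r :: ('v,'e,'k::field) fa set ring)"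
proof -
  interpret L: ring "LL s r :: ('v,'e,'k::field) fa set ring" by (rule ring_LL)
  show ?thesis by (intro L.finsum_closed) (auto simp: gens_closed)
qed

lemma vH_closed: "vH s r H w \<in> carrier (LL s r :: ('v,'e,'k::field) fa set ring)"
proof -
  interpret L: ring "LL s r :: ('v,'e,'k::field) fa set ring" by (rule ring_LL)
  show ?thesis using SS_closed by (simp add: vH_L[OF finT] gens_closed)
qed

lemma Z1: "lghost s r f \<otimes>\<^bsub>LL s r\<^esub> vH s r H w = (\<zero>\<^bsub>LL s r\<^esub> :: ('v,'e,'k::field) fa set)"
proof -
  interpret L: ring "LL s r :: ('v,'e,'k::field) fa set ring" by (rule ring_LL)
  let ?G = "lghost s r :: 'e \<Rightarrow> ('v,'e,'k) fa set" and ?E = "ledge s r :: 'e \<Rightarrow> ('v,'e,'k) fa set"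
    and ?V = "lvert s r :: 'v \<Rightarrow> ('v,'e,'k) fa set"
  let ?S = "finsum (LL s r) (\<lambda>e. ?E e \<otimes>\<^bsub>LL s r\<^esub> ?G e) T"
  have S: "?S \<in> carrier (LL s r)" by (rule SS_closed)
  have "?G f \<otimes>\<^bsub>LL s r\<^esub> vH s r H w = ?G f \<otimes>\<^bsub>LL s r\<^esub> ?V w \<ominus>\<^bsub>LL s r\<^esub> ?G f \<otimes>\<^bsub>LL s r\<^esub> ?S"
    using S by (simp add: vH_L[OF finT] a_minus_def L.r_distr L.r_minus gens_closed)
  also have "?G f \<otimes>\<^bsub>LL s r\<^esub> ?S = finsum (LL s r) (\<lambda>e. ?G f \<otimes>\<^bsub>LL s r\<^esub> (?E e \<otimes>\<^bsub>LL s r\<^esub> ?G e)) T"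
    by (rule L.finsum_rdistr) (auto simp: finT gens_closed)
  also have "\<dots> = finsum (LL s r) (\<lambda>e. if f = e then ?G e else \<zero>\<^bsub>LL s r\<^esub>) T"
  proof (rule L.finsum_cong')
    fix e assume "e \<in> T"
    show "?G f \<otimes>\<^bsub>LL s r\<^esub> (?E e \<otimes>\<^bsub>LL s r\<^esub> ?G e) = (if f = e then ?G e else \<zero>\<^bsub>LL s r\<^esub>)"
      by (simp add: L.m_assoc[symmetric] gens_closed LR6 LR4)
  qed (auto simp: gens_closed)
  also have "\<dots> = (if s f = w then ?G f else \<zero>\<^bsub>LL s r\<^esub>)"
  proof (cases "s f = w")
    case True
    then show ?thesis using f_in_T by (simp add: L.finsum_singleton finT gens_closed)
  next
    case False
    then have "finsum (LL s r) (\<lambda>e. if f = e then ?G e else \<zero>\<^bsub>LL s r\<^esub>) T = finsum (LL s r) (\<lambda>e. \<zero>\<^bsub>LL s r\<^esub>) T"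
      using f_in_T by (intro L.finsum_cong') (auto simp: gens_closed)
    then show ?thesis using False by simp
  qed
  also have "?G f \<otimes>\<^bsub>LL s r\<^esub> ?V w = (if s f = w then ?G f else \<zero>\<^bsub>LL s r\<^esub>)"
  proof (cases "s f = w")
    case True then show ?thesis using LR5[of s r f] by simp
  next
    case False
    have "?G f \<otimes>\<^bsub>LL s r\<^esub> ?V w = (?G f \<otimes>\<^bsub>LL s r\<^esub> ?V (s f)) \<otimes>\<^bsub>LL s r\<^esub> ?V w" by (simp add: LR5)
    also have "\<dots> = ?G f \<otimes>\<^bsub>LL s r\<^esub> (?V (s f) \<otimes>\<^bsub>LL s r\<^esub> ?V w)" by (simp add: L.m_assoc gens_closed)
    also have "\<dots> = \<zero>\<^bsub>LL s r\<^esub>" using False by (simp add: LR1 gens_closed)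
    finally show ?thesis using False by simp
  qed
  finally show ?thesis by (simp add: gens_closed)
qed

lemma Z2: "vH s r H w \<otimes>\<^bsub>LL s r\<^esub> ledge s r f = (\<zero>\<^bsub>LL s r\<^esub> :: ('v,'e,'k::field) fa set)"
proof -
  interpret L: ring "LL s r :: ('v,'e,'k::field) fa set ring" by (rule ring_LL)
  let ?G = "lghost s r :: 'e \<Rightarrow> ('v,'e,'k) fa set" and ?E = "ledge s r :: 'e \<Rightarrow> ('v,'e,'k) fa set"
    and ?V = "lvert s r :: 'v \<Rightarrow> ('v,'e,'k) fa set"
  let ?S = "finsum (LL s r) (\<lambda>e. ?E e \<otimes>\<^bsub>LL s r\<^esub> ?G e) T"
  have S: "?S \<in> carrier (LL s r)" by (rule SS_closed)
  have "vH s r H w \<otimes>\<^bsub>LL s r\<^esub> ?E f = ?V w \<otimes>\<^bsub>LL s r\<^esub> ?E f \<ominus>\<^bsub>LL s r\<^esub> ?S \<otimes>\<^bsub>LL s r\<^esub> ?E f"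
    using S by (simp add: vH_L[OF finT] a_minus_def L.l_distr L.l_minus gens_closed)
  also have "?S \<otimes>\<^bsub>LL s r\<^esub> ?E f = finsum (LL s r) (\<lambda>e. (?E e \<otimes>\<^bsub>LL s r\<^esub> ?G e) \<otimes>\<^bsub>LL s r\<^esub> ?E f) T"
    by (rule L.finsum_ldistr) (auto simp: finT gens_closed)
  also have "\<dots> = finsum (LL s r) (\<lambda>e. if f = e then ?E e else \<zero>\<^bsub>LL s r\<^esub>) T"
  proof (rule L.finsum_cong')
    fix e assume "e \<in> T"
    show "(?E e \<otimes>\<^bsub>LL s r\<^esub> ?G e) \<otimes>\<^bsub>LL s r\<^esub> ?E f = (if f = e then ?E e else \<zero>\<^bsub>LL s r\<^esub>)"
      by (auto simp: L.m_assoc gens_closed LR6 LR3)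
  qed (auto simp: gens_closed)
  also have "\<dots> = (if s f = w then ?E f else \<zero>\<^bsub>LL s r\<^esub>)"
  proof (cases "s f = w")
    case True
    then show ?thesis using f_in_T by (simp add: L.finsum_singleton finT gens_closed)
  next
    case False
    then have "finsum (LL s r) (\<lambda>e. if f = e then ?E e else \<zero>\<^bsub>LL s r\<^esub>) T = finsum (LL s r) (\<lambda>e. \<zero>\<^bsub>LL s r\<^esub>) T"
      using f_in_T by (intro L.finsum_cong') (auto simp: gens_closed)
    then show ?thesis using False by simp
  qed
  also have "?V w \<otimes>\<^bsub>LL s r\<^esub> ?E f = (if s f = w then ?E f else \<zero>\<^bsub>LL s r\<^esub>)"
  proof (cases "s f = w")
    case True then show ?thesis using LR2[of s r f] by simp
  next
    case False
    have "?V w \<otimes>\<^bsub>LL s r\<^esub> ?E f = ?V w \<otimes>\<^bsub>LL s r\<^esub> (?V (s f) \<otimes>\<^bsub>LL s r\<^esub> ?E f)" by (simp add: LR2)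
    also have "\<dots> = (?V w \<otimes>\<^bsub>LL s r\<^esub> ?V (s f)) \<otimes>\<^bsub>LL s r\<^esub> ?E f" by (simp add: L.m_assoc gens_closed)
    also have "\<dots> = \<zero>\<^bsub>LL s r\<^esub>" using False by (simp add: LR1 gens_closed)
    finally show ?thesis using False by simp
  qed
  finally show ?thesis by (simp add: gens_closed)
qed

lemma a_unit: "\<one>\<^bsub>LL s r\<^esub> \<oplus>\<^bsub>LL s r\<^esub> (\<one>\<^bsub>LL s r\<^esub> \<oplus>\<^bsub>LL s r\<^esub> \<one>\<^bsub>LL s r\<^esub>) \<otimes>\<^bsub>LL s r\<^esub> vH s r H w \<otimes>\<^bsub>LL s r\<^esub> lghost s r f
   \<in> Units (LL s r :: ('v,'e,'k::field) fa set ring)"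
proof -
  interpret L: ring "LL s r :: ('v,'e,'k::field) fa set ring" by (rule ring_LL)
  let ?x = "vH s r H w \<otimes>\<^bsub>LL s r\<^esub> lghost s r f :: ('v,'e,'k) fa set"
  have xc: "?x \<in> carrier (LL s r)" by (rule L.m_closed) (simp_all add: vH_closed gens_closed)
  have A: "(vH s r H w :: ('v,'e,'k) fa set) \<in> carrier (LL s r)" "(lghost s r f :: ('v,'e,'k) fa set) \<in> carrier (LL s r)" by (simp_all add: vH_closed gens_closed)
  have "?x \<otimes>\<^bsub>LL s r\<^esub> ?x = vH s r H w \<otimes>\<^bsub>LL s r\<^esub> (lghost s r f \<otimes>\<^bsub>LL s r\<^esub> (vH s r H w \<otimes>\<^bsub>LL s r\<^esub> lghost s r f))"
    using A xc by (rule_tac L.m_assoc) auto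
  also have "(lghost s r f :: ('v,'e,'k) fa set) \<otimes>\<^bsub>LL s r\<^esub> (vH s r H w \<otimes>\<^bsub>LL s r\<^esub> lghost s r f) = (lghost s r f \<otimes>\<^bsub>LL s r\<^esub> vH s r H w) \<otimes>\<^bsub>LL s r\<^esub> lghost s r f"
    by (rule sym, rule L.m_assoc) (use A in auto)
  finally have xx: "?x \<otimes>\<^bsub>LL s r\<^esub> ?x = \<zero>\<^bsub>LL s r\<^esub>" using A by (simp add: Z1 L.l_null L.r_null)
  have eq: "((\<one>\<^bsub>LL s r\<^esub> \<oplus>\<^bsub>LL s r\<^esub> \<one>\<^bsub>LL s r\<^esub>) \<otimes>\<^bsub>LL s r\<^esub> (vH s r H w :: ('v,'e,'k) fa set)) \<otimes>\<^bsub>LL s r\<^esub> lghost s r f = (\<one>\<^bsub>LL s r\<^esub> \<oplus>\<^bsub>LL s r\<^esub> \<one>\<^bsub>LL s r\<^esub>) \<otimes>\<^bsub>LL s r\<^esub> ?x"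
    by (rule L.m_assoc) (use A in auto)
  show ?thesis using L.unit_aux[OF xc xx] eq by simp
qed

lemma b_unit: "\<one>\<^bsub>LL s r\<^esub> \<oplus>\<^bsub>LL s r\<^esub> (\<one>\<^bsub>LL s r\<^esub> \<oplus>\<^bsub>LL s r\<^esub> \<one>\<^bsub>LL s r\<^esub>) \<otimes>\<^bsub>LL s r\<^esub> ledge s r f \<otimes>\<^bsub>LL s r\<^esub> vH s r H w
   \<in> Units (LL s r :: ('v,'e,'k::field) fa set ring)"
proof -
  interpret L: ring "LL s r :: ('v,'e,'k::field) fa set ring" by (rule ring_LL)
  let ?x = "ledge s r f \<otimes>\<^bsub>LL s r\<^esub> vH s r H w :: ('v,'e,'k) fa set"
  have xc: "?x \<in> carrier (LL s r)" by (rule L.m_closed) (simp_all add: vH_closed gens_closed)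
  have A: "(vH s r H w :: ('v,'e,'k) fa set) \<in> carrier (LL s r)" "(ledge s r f :: ('v,'e,'k) fa set) \<in> carrier (LL s r)" by (simp_all add: vH_closed gens_closed)
  have "?x \<otimes>\<^bsub>LL s r\<^esub> ?x = ledge s r f \<otimes>\<^bsub>LL s r\<^esub> (vH s r H w \<otimes>\<^bsub>LL s r\<^esub> (ledge s r f \<otimes>\<^bsub>LL s r\<^esub> vH s r H w))"
    using A xc by (rule_tac L.m_assoc) auto
  also have "(vH s r H w :: ('v,'e,'k) fa set) \<otimes>\<^bsub>LL s r\<^esub> (ledge s r f \<otimes>\<^bsub>LL s r\<^esub> vH s r H w) = (vH s r H w \<otimes>\<^bsub>LL s r\<^esub> ledge s r f) \<otimes>\<^bsub>LL s r\<^esub> vH s r H w"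
    by (rule sym, rule L.m_assoc) (use A in auto)
  finally have xx: "?x \<otimes>\<^bsub>LL s r\<^esub> ?x = \<zero>\<^bsub>LL s r\<^esub>" using A by (simp add: Z2 L.l_null L.r_null)
  have eq: "((\<one>\<^bsub>LL s r\<^esub> \<oplus>\<^bsub>LL s r\<^esub> \<one>\<^bsub>LL s r\<^esub>) \<otimes>\<^bsub>LL s r\<^esub> (ledge s r f :: ('v,'e,'k) fa set)) \<otimes>\<^bsub>LL s r\<^esub> vH s r H w = (\<one>\<^bsub>LL s r\<^esub> \<oplus>\<^bsub>LL s r\<^esub> \<one>\<^bsub>LL s r\<^esub>) \<otimes>\<^bsub>LL s r\<^esub> ?x"
    by (rule L.m_assoc) (use A in auto)
  show ?thesis using L.unit_aux[OF xc xx] eq by simp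
qed

end

context lsetup
begin

definition RL :: "('v,'e,'k::field) fa set \<Rightarrow> ('e list \<Rightarrow> 'k) \<Rightarrow> 'e list \<Rightarrow> 'k" where
  "RL Z = rho s r w (SOME x. x \<in> Z)"

lemma II_Kset: "II s r \<subseteq> (Kset s r w :: ('v,'e,'k::field) fa set)"
  by (rule lpa_ideal_Kset[OF nreg])

lemma RL_pi:
  assumes xc: "x \<in> fa_carrier"
  shows "RL (II s r +>\<^bsub>FA\<^esub> x) = rho s r w (x :: ('v,'e,'k::field) fa)"
proof -
  have z: "fa_zero \<in> (II s r :: ('v,'e,'k) fa set)"
    using additive_subgroup.zero_closed[OF ideal.axioms(1)[OF lpa_ideal_ideal[of s r]]]
    by (simp add: FA_simps)
  have "x \<in> II s r +>\<^bsub>FA\<^esub> x"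
    unfolding a_r_coset_def' using z by (auto simp: FA_simps fa_add_def fa_zero_def intro!: bexI[of _ fa_zero])
  then have "(SOME y. y \<in> II s r +>\<^bsub>FA\<^esub> x) \<in> II s r +>\<^bsub>FA\<^esub> x" by (rule someI[of "\<lambda>y. y \<in> II s r +>\<^bsub>FA\<^esub> x"])
  then obtain h where h: "h \<in> II s r" and y: "(SOME y. y \<in> II s r +>\<^bsub>FA\<^esub> x) = fa_add h x"
    unfolding a_r_coset_def' by (auto simp: FA_simps)
  have hK: "h \<in> Kset s r w" using h II_Kset by auto
  then have hc: "h \<in> fa_carrier" by (simp add: Kset_def)
  show ?thesis unfolding RL_def y
    using hK by (auto simp: fun_eq_iff rho_add[OF hc xc] Kset_def)
qed

lemma RL_mult:
  assumes "Z1 \<in> carrier (LL s r)" "Z2 \<in> carrier (LL s r)"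
  shows "RL (Z1 \<otimes>\<^bsub>LL s r\<^esub> Z2) \<phi> = RL Z1 (RL Z2 \<phi>) \<and> Z1 \<otimes>\<^bsub>LL s r\<^esub> Z2 \<in> carrier (LL s r :: ('v,'e,'k::field) fa set ring)"
proof -
  obtain x1 where x1: "x1 \<in> fa_carrier" "Z1 = II s r +>\<^bsub>FA\<^esub> x1" using LL_carrier[OF assms(1)] by auto
  obtain x2 where x2: "x2 \<in> fa_carrier" "Z2 = II s r +>\<^bsub>FA\<^esub> x2" using LL_carrier[OF assms(2)] by auto
  have "Z1 \<otimes>\<^bsub>LL s r\<^esub> Z2 = II s r +>\<^bsub>FA\<^esub> fa_mult x1 x2" using x1 x2 by (simp add: pi_mult)
  then show ?thesis using x1 x2
    by (simp add: RL_pi fa_mult_closed fun_eq_iff rho_mult pi_closed)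
qed

lemma RL_one: "RL (\<one>\<^bsub>LL s r\<^esub> :: ('v,'e,'k::field) fa set) \<phi> = \<phi>"
proof -
  have "RL (\<one>\<^bsub>LL s r\<^esub> :: ('v,'e,'k::field) fa set) = rho s r w fa_one"
    by (simp only: pi_one[of s r, symmetric]) (rule RL_pi[OF fa_one_carrier])
  then show ?thesis by (simp add: rho_one fun_eq_iff)
qed

definition vec :: "'k \<Rightarrow> 'k \<Rightarrow> 'e list \<Rightarrow> 'k::field" where
  "vec c d = (\<lambda>\<nu>. if \<nu> = [] then c else if \<nu> = [f] then d else 0)"

abbreviation "vHrep \<equiv> fa_diff (fa_gen (GV w)) (fa_sum T ee_star)"

lemma vHrep_carrier: "(vHrep :: ('v,'e,'k::field) fa) \<in> fa_carrier"
  by (intro fa_diff_carrier fa_gen_carrier fa_sum_carrier finT ee_star_carrier)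

lemma act_EG: "act s r w [GE e, GS e] \<psi> \<nu> = (case \<nu> of [] \<Rightarrow> 0 | e' # \<mu> \<Rightarrow> if e' = e \<and> valid s r w \<nu> then \<psi> \<nu> else (0::'k::field))"
  by (cases \<nu>) (auto simp: act_def)

lemma act_V: "act s r w [GV v] \<psi> \<nu> = (if valid s r w \<nu> \<and> src s w \<nu> = v then \<psi> \<nu> else (0::'k::field))"
  by (simp add: act_def)

lemma rho_vH: "rho s r w vHrep \<psi> \<nu> =
   (if valid s r w \<nu> \<and> src s w \<nu> = w then \<psi> \<nu> else 0) -
   (\<Sum>e\<in>T. case \<nu> of [] \<Rightarrow> 0 | e' # \<mu> \<Rightarrow> if e' = e \<and> valid s r w \<nu> then \<psi> \<nu> else (0::'k::field))"
proof -
  have "rho s r w (fa_sum T ee_star) \<psi> \<nu> = (\<Sum>e\<in>T. act s r w [GE e, GS e] \<psi> \<nu>)"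
    using rho_sum[of T ee_star, OF finT ee_star_carrier] by (simp add: ee_star_def rho_gen2)
  then show ?thesis
    by (simp add: rho_diff[OF fa_gen_carrier fa_sum_carrier[OF finT ee_star_carrier]] rho_gen act_V act_EG)
qed

lemma rho_GS_vec: "rho s r w (fa_gen (GS f)) (vec c d) = vec d (0::'k::field)"
  by (auto simp: fun_eq_iff rho_gen act_def vec_def rf)

lemma rho_vH_vec1: "rho s r w vHrep (vec d 0) = vec d (0::'k::field)"
  by (auto simp: fun_eq_iff rho_vH vec_def list.case_eq_if)

lemma rho_vH_vec2: "rho s r w vHrep (vec c d) = vec c (0::'k::field)"
proof
  fix \<nu> :: "'e list"
  show "rho s r w vHrep (vec c d) \<nu> = vec c 0 \<nu>"
  proof (cases "\<nu> = [f]")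
    case True
    have "(\<Sum>e\<in>T. case \<nu> of [] \<Rightarrow> 0 | e' # \<mu> \<Rightarrow> if e' = e \<and> valid s r w \<nu> then vec c d \<nu> else (0::'k)) =
          (\<Sum>e\<in>T. if f = e then d else 0)"
      by (rule sum.cong) (auto simp: True vec_def rf)
    also have "\<dots> = (if s f = w then d else 0)" using finT f_in_T by (simp add: sum.delta)
    finally show ?thesis using f_in_T finT by (simp add: rho_vH True vec_def rf sum.delta')
  next
    case False
    then show ?thesis by (auto simp: rho_vH vec_def list.case_eq_if)
  qed
qed

lemma rho_GE_vec: "rho s r w (fa_gen (GE f)) (vec c 0) = vec 0 (c::'k::field)"
  by (auto simp: fun_eq_iff rho_gen act_def vec_def rf split: list.splits)

end

context lsetup
begin

definition a_el :: "('v,'e,'k::field) fa set" where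
  "a_el = \<one>\<^bsub>LL s r\<^esub> \<oplus>\<^bsub>LL s r\<^esub> (\<one>\<^bsub>LL s r\<^esub> \<oplus>\<^bsub>LL s r\<^esub> \<one>\<^bsub>LL s r\<^esub>) \<otimes>\<^bsub>LL s r\<^esub> vH s r H w \<otimes>\<^bsub>LL s r\<^esub> lghost s r f"

definition b_el :: "('v,'e,'k::field) fa set" where
  "b_el = \<one>\<^bsub>LL s r\<^esub> \<oplus>\<^bsub>LL s r\<^esub> (\<one>\<^bsub>LL s r\<^esub> \<oplus>\<^bsub>LL s r\<^esub> \<one>\<^bsub>LL s r\<^esub>) \<otimes>\<^bsub>LL s r\<^esub> ledge s r f \<otimes>\<^bsub>LL s r\<^esub> vH s r H w"

abbreviation "twoF \<equiv> fa_add fa_one fa_one"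

lemma twoF_carrier: "(twoF :: ('v,'e,'k::field) fa) \<in> fa_carrier"
  by (intro fa_add_carrier fa_one_carrier)

lemma a_rep: "a_el = II s r +>\<^bsub>FA\<^esub> fa_add fa_one (fa_mult (fa_mult twoF vHrep) (fa_gen (GS f)))"
  by (simp add: a_el_def pi_add pi_mult pi_one fa_add_carrier fa_mult_closed fa_one_carrier fa_gen_carrier
      vHrep_carrier twoF_carrier vH_def lghost_def lcls_def)

lemma b_rep: "b_el = II s r +>\<^bsub>FA\<^esub> fa_add fa_one (fa_mult (fa_mult twoF (fa_gen (GE f))) vHrep)"
  by (simp add: b_el_def pi_add pi_mult pi_one fa_add_carrier fa_mult_closed fa_one_carrier fa_gen_carrier
      vHrep_carrier twoF_carrier vH_def ledge_def lcls_def)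

lemma rho_two: "rho s r w twoF \<chi> \<nu> = \<chi> \<nu> + (\<chi> \<nu> :: 'k::field)"
  by (simp add: rho_add fa_one_carrier rho_one)

lemma RL_a: "RL a_el (vec c d) = vec (c + d + d) (d::'k::field)"
proof -
  have "RL a_el (vec c d) = rho s r w (fa_add fa_one (fa_mult (fa_mult twoF vHrep) (fa_gen (GS f)))) (vec c d)"
    by (simp add: a_rep RL_pi fa_add_carrier fa_mult_closed fa_one_carrier fa_gen_carrier vHrep_carrier twoF_carrier)
  also have "\<dots> = (\<lambda>\<nu>. vec c d \<nu> + (vec d 0 \<nu> + vec d 0 \<nu>))"
    by (simp add: fun_eq_iff rho_add rho_mult rho_one rho_two fa_add_carrier fa_mult_closed fa_one_carrier fa_gen_carrier
        vHrep_carrier twoF_carrier rho_GS_vec rho_vH_vec1)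
  also have "\<dots> = vec (c + d + d) d" by (auto simp: fun_eq_iff vec_def)
  finally show ?thesis .
qed

lemma RL_b: "RL b_el (vec c d) = vec c (d + c + (c::'k::field))"
proof -
  have "RL b_el (vec c d) = rho s r w (fa_add fa_one (fa_mult (fa_mult twoF (fa_gen (GE f))) vHrep)) (vec c d)"
    by (simp add: b_rep RL_pi fa_add_carrier fa_mult_closed fa_one_carrier fa_gen_carrier vHrep_carrier twoF_carrier)
  also have "\<dots> = (\<lambda>\<nu>. vec c d \<nu> + (vec 0 c \<nu> + vec 0 c \<nu>))"
    by (simp add: fun_eq_iff rho_add rho_mult rho_one rho_two fa_add_carrier fa_mult_closed fa_one_carrier fa_gen_carrier
        vHrep_carrier twoF_carrier rho_GE_vec rho_vH_vec2)
  also have "\<dots> = vec c (d + c + c)" by (auto simp: fun_eq_iff vec_def)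
  finally show ?thesis .
qed

lemma vec_eq: "vec c d = vec c' d' \<longleftrightarrow> c = c' \<and> (d::'k::field) = d'"
proof
  assume "vec c d = vec c' d'"
  then have "vec c d [] = vec c' d' []" "vec c d [f] = vec c' d' [f]" by auto
  then show "c = c' \<and> d = d'" by (simp add: vec_def)
qed simp

lemma a_closed: "a_el \<in> carrier (LL s r :: ('v,'e,'k::field) fa set ring)"
  using a_unit unfolding a_el_def Units_def by auto

lemma b_closed: "b_el \<in> carrier (LL s r :: ('v,'e,'k::field) fa set ring)"
  using b_unit unfolding b_el_def Units_def by auto

end

fun step :: "bool \<times> bool \<Rightarrow> int \<times> int \<Rightarrow> int \<times> int" where
  "step (sg, True) (x, y) = (if sg then (x + 2 * y, y) else (x - 2 * y, y))"
| "step (sg, False) (x, y) = (if sg then (x, y + 2 * x) else (x, y - 2 * x))"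

fun reg :: "bool \<times> bool \<Rightarrow> int \<times> int \<Rightarrow> bool" where
  "reg (sg, True) (c, d) = (\<bar>c\<bar> > \<bar>d\<bar> \<and> (if sg then c*d > 0 else c*d < 0))"
| "reg (sg, False) (c, d) = (\<bar>d\<bar> > \<bar>c\<bar> \<and> (if sg then c*d > 0 else c*d < 0))"

definition start :: "bool \<Rightarrow> int \<times> int" where
  "start b = (if b then (0, 1) else (1, 0))"

lemma reg_start: "\<not> reg l (start b)"
  by (cases l; cases "snd l"; cases b) (auto simp: start_def)

lemma step_reg:
  assumes "p = start (snd l) \<or> (\<exists>l'. reg l' p \<and> \<not> (snd l' = snd l \<and> fst l' \<noteq> fst l))"
  shows "reg l (step l p)"
proof -
  obtain sg b where l: "l = (sg, b)" by (cases l)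
  obtain c d where p: "p = (c, d)" by (cases p)
  from assms show ?thesis
  proof
    assume "p = start (snd l)"
    then show ?thesis using l p by (cases b; cases sg) (auto simp: start_def)
  next
    assume "\<exists>l'. reg l' p \<and> \<not> (snd l' = snd l \<and> fst l' \<noteq> fst l)"
    then obtain sg' b' where r: "reg (sg', b') (c, d)" and nc: "\<not> (b' = b \<and> sg' \<noteq> sg)"
      using p l by auto
    show ?thesis
      using r nc unfolding l p
      by (cases b; cases b'; cases sg; cases sg')
         (auto simp: zero_less_mult_iff mult_less_0_iff abs_if split: if_splits)
  qed
qed

definition red :: "(bool \<times> bool) list \<Rightarrow> bool" where
  "red ls \<longleftrightarrow> (\<forall>i. Suc i < length ls \<longrightarrow> \<not> (snd (ls ! i) = snd (ls ! Suc i) \<and> fst (ls ! i) \<noteq> fst (ls ! Suc i)))"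

lemma pingpong:
  "ls \<noteq> [] \<Longrightarrow> red ls \<Longrightarrow> reg (hd ls) (foldr step ls (start (snd (last ls))))"
proof (induction ls)
  case Nil then show ?case by simp
next
  case (Cons l ls)
  show ?case
  proof (cases "ls = []")
    case True then show ?thesis by (simp add: step_reg)
  next
    case False
    have "red ls" using Cons.prems(2) unfolding red_def
      by (metis Suc_less_eq length_Cons nth_Cons_Suc)
    then have IH: "reg (hd ls) (foldr step ls (start (snd (last ls))))" using Cons.IH False by simp
    have adj: "\<not> (snd l = snd (hd ls) \<and> fst l \<noteq> fst (hd ls))"
      using Cons.prems(2) False unfolding red_def
      by (cases ls) (auto dest: spec[of _ 0])
    have "reg l (step l (foldr step ls (start (snd (last ls)))))"
      by (rule step_reg, rule disjI2, rule exI[of _ "hd ls"]) (use IH adj in auto)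
    then show ?thesis using False by simp
  qed
qed

context lsetup
begin

definition vecI :: "int \<times> int \<Rightarrow> 'e list \<Rightarrow> 'k::field" where
  "vecI p = vec (of_int (fst p)) (of_int (snd p))"

lemma step_inv: "step (True, b) (step (False, b) p) = p"
  by (cases p; cases b) auto

lemma RL_a_I: "RL a_el (vecI p) = (vecI (step (True, True) p) :: 'e list \<Rightarrow> 'k::field)"
  by (cases p) (simp add: vecI_def RL_a algebra_simps)

lemma RL_b_I: "RL b_el (vecI p) = (vecI (step (True, False) p) :: 'e list \<Rightarrow> 'k::field)"
  by (cases p) (simp add: vecI_def RL_b algebra_simps)

lemma two_elems: "y1 \<in> {a, b} \<Longrightarrow> y2 \<in> {a, b} \<Longrightarrow> a \<noteq> b \<Longrightarrow> ((y1 = a) = (y2 = a)) = (y1 = y2)"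
  by blast

lemma main:
  "let L = (LL s r :: ('v,'e,'k::field_char_0) fa set ring);
       a = \<one>\<^bsub>L\<^esub> \<oplus>\<^bsub>L\<^esub> (\<one>\<^bsub>L\<^esub> \<oplus>\<^bsub>L\<^esub> \<one>\<^bsub>L\<^esub>) \<otimes>\<^bsub>L\<^esub> vH s r H w \<otimes>\<^bsub>L\<^esub> lghost s r f;
       b = \<one>\<^bsub>L\<^esub> \<oplus>\<^bsub>L\<^esub> (\<one>\<^bsub>L\<^esub> \<oplus>\<^bsub>L\<^esub> \<one>\<^bsub>L\<^esub>) \<otimes>\<^bsub>L\<^esub> ledge s r f \<otimes>\<^bsub>L\<^esub> vH s r H w;
       U = units_of L;
       G = U\<lparr>carrier := generate U {a, b}\<rparr>
   in a \<in> Units L \<and> b \<in> Units L \<and> is_free_group G \<and> \<not> is_cyclic G"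
proof -
  interpret L: ring "LL s r :: ('v,'e,'k) fa set ring" by (rule ring_LL)
  define a :: "('v,'e,'k) fa set" where "a = a_el"
  define b :: "('v,'e,'k) fa set" where "b = b_el"
  define U where "U = units_of (LL s r :: ('v,'e,'k) fa set ring)"
  define G where "G = U\<lparr>carrier := generate U {a, b}\<rparr>"
  have aU: "a \<in> Units (LL s r)" using a_unit by (simp add: a_def a_el_def)
  have bU: "b \<in> Units (LL s r)" using b_unit by (simp add: b_def b_el_def)
  have ac: "a \<in> carrier (LL s r)" and bc: "b \<in> carrier (LL s r)" using aU bU by (auto simp: Units_def)
  interpret U: group U unfolding U_def by (rule L.units_group)
  have abU: "{a, b} \<subseteq> carrier U" using aU bU by (simp add: U_def units_of_carrier)
  have sg: "subgroup (generate U {a, b}) U" by (rule U.generate_is_subgroup[OF abU])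
  have grpG: "group G" unfolding G_def by (rule subgroup.subgroup_is_group[OF sg U.is_group])
  interpret G: group G by (rule grpG)
  have cG: "carrier G = generate U {a, b}" by (simp add: G_def)
  have multG: "monoid.mult G = monoid.mult (LL s r)" by (simp add: G_def U_def units_of_mult)
  have oneG: "\<one>\<^bsub>G\<^esub> = \<one>\<^bsub>LL s r\<^esub>" by (simp add: G_def U_def units_of_one)
  have GU: "carrier G \<subseteq> Units (LL s r)" using subgroup.subset[OF sg] by (simp add: cG U_def units_of_carrier)
  have invG: "inv\<^bsub>G\<^esub> x = inv\<^bsub>LL s r\<^esub> x" if "x \<in> carrier G" for x
  proof -
    have "inv\<^bsub>G\<^esub> x = inv\<^bsub>U\<^esub> x" unfolding G_def using U.m_inv_consistent[OF sg] that cG by simp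
    also have "\<dots> = inv\<^bsub>LL s r\<^esub> x" unfolding U_def by (rule L.units_of_inv) (use GU that in auto)
    finally show ?thesis .
  qed
  have aG: "a \<in> carrier G" and bG: "b \<in> carrier G" by (simp_all add: cG generate.incl)
  have RLa: "RL a (vecI p) = vecI (step (True, True) p)" for p :: "int \<times> int"
    by (simp add: a_def RL_a_I)
  have RLb: "RL b (vecI p) = vecI (step (True, False) p)" for p :: "int \<times> int"
    by (simp add: b_def RL_b_I)
  have vecI_inj: "vecI p = (vecI q :: 'e list \<Rightarrow> 'k) \<longleftrightarrow> p = q" for p q :: "int \<times> int"
    by (cases p; cases q) (simp add: vecI_def vec_eq)
  have ab: "a \<noteq> b"
  proof
    assume "a = b"
    then have "RL a (vecI (0, 1)) = RL b (vecI (0, 1))" by simp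
    then show False using RLa RLb vecI_inj by simp
  qed
  define lift :: "bool \<times> ('v,'e,'k) fa set \<Rightarrow> bool \<times> bool" where "lift = (\<lambda>(bb, y). (bb, y = a))"
  have letter: "RL (if bb then y else inv\<^bsub>G\<^esub> y) (vecI p) = vecI (step (lift (bb, y)) p)
     \<and> (if bb then y else inv\<^bsub>G\<^esub> y) \<in> carrier G"
    if y: "y \<in> {a, b}" for bb y p
  proof -
    have yc: "y \<in> carrier G" using y aG bG by auto
    have yL: "y \<in> carrier (LL s r)" using y ac bc by auto
    have RLy: "RL y (vecI q) = vecI (step (True, y = a) q)" for q
    proof -
      from y have "y = a \<or> y = b" by simp
      then show ?thesis
      proof
        assume "y = a" then show ?thesis using RLa by simp
      next
        assume "y = b" then show ?thesis using RLb ab by simp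
      qed
    qed
    show ?thesis
    proof (cases bb)
      case True then show ?thesis using RLy yc by (simp add: lift_def)
    next
      case False
      have iU: "inv\<^bsub>LL s r\<^esub> y \<in> carrier (LL s r)" and il: "inv\<^bsub>LL s r\<^esub> y \<otimes>\<^bsub>LL s r\<^esub> y = \<one>\<^bsub>LL s r\<^esub>"
        using yc GU by auto
      let ?q = "step (False, y = a) p"
      have "RL (inv\<^bsub>LL s r\<^esub> y) (vecI p) = RL (inv\<^bsub>LL s r\<^esub> y) (RL y (vecI ?q))"
        using RLy step_inv by simp
      also have "\<dots> = RL (inv\<^bsub>LL s r\<^esub> y \<otimes>\<^bsub>LL s r\<^esub> y) (vecI ?q)" using RL_mult[OF iU yL] by simp
      also have "\<dots> = vecI ?q" using il RL_one by simp
      moreover have "inv\<^bsub>G\<^esub> y \<in> carrier G" using yc by simp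
      ultimately show ?thesis using False yc invG[OF yc] by (simp add: lift_def)
    qed
  qed
  have word: "word_eval G ws \<in> carrier G \<and> RL (word_eval G ws) (vecI p) = vecI (foldr step (map lift ws) p)"
    if "set (map snd ws) \<subseteq> {a, b}" for ws p
    using that
  proof (induction ws arbitrary: p)
    case Nil
    have "\<one>\<^bsub>G\<^esub> \<in> carrier G" by simp
    then show ?case by (simp add: word_eval_def oneG RL_one)
  next
    case (Cons l ws)
    obtain bb y where l: "l = (bb, y)" by (cases l)
    have y: "y \<in> {a, b}" using Cons.prems l by auto
    let ?x = "if bb then y else inv\<^bsub>G\<^esub> y"
    have IH: "word_eval G ws \<in> carrier G" "RL (word_eval G ws) (vecI q) = vecI (foldr step (map lift ws) q)" for q
      using Cons by auto
    have xc: "?x \<in> carrier G" using letter[OF y] by blast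
    have we: "word_eval G (l # ws) = ?x \<otimes>\<^bsub>G\<^esub> word_eval G ws" by (simp add: word_eval_def l)
    have xL: "?x \<in> carrier (LL s r)" and wL: "word_eval G ws \<in> carrier (LL s r)"
      using xc IH(1) GU by (auto simp: Units_def)
    have "RL (word_eval G (l # ws)) (vecI p) = RL ?x (RL (word_eval G ws) (vecI p))"
      using we RL_mult[OF xL wL] multG by simp
    also have "\<dots> = vecI (step (lift l) (foldr step (map lift ws) p))"
      using IH(2) letter[OF y] l by simp
    finally show ?case using we xc IH(1) by simp
  qed
  have free: "free_basis G {a, b}"
    unfolding free_basis_def
  proof (intro conjI allI impI)
    show "{a, b} \<subseteq> carrier G" using aG bG by auto
    show "generate G {a, b} = carrier G"
      unfolding G_def using U.generate_consistent[OF _ sg] by (simp add: generate.incl subsetI)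
  next
    fix ws :: "(bool \<times> ('v,'e,'k) fa set) list"
    assume h: "ws \<noteq> [] \<and> set (map snd ws) \<subseteq> {a, b} \<and> reduced_word ws"
    let ?ls = "map lift ws"
    have lsne: "?ls \<noteq> []" using h by simp
    have red: "red ?ls"
      unfolding red_def
    proof (intro allI impI)
      fix i assume i: "Suc i < length ?ls"
      have yi: "snd (ws ! i) \<in> {a, b}" "snd (ws ! Suc i) \<in> {a, b}"
        using h i by (metis (no_types) length_map nth_map nth_mem subsetD Suc_lessD)+
      have "\<not> (snd (ws ! i) = snd (ws ! Suc i) \<and> fst (ws ! i) \<noteq> fst (ws ! Suc i))"
        using h i unfolding reduced_word_def by auto
      then show "\<not> (snd (?ls ! i) = snd (?ls ! Suc i) \<and> fst (?ls ! i) \<noteq> fst (?ls ! Suc i))"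
        using i two_elems[OF yi ab] by (simp add: lift_def case_prod_beta)
    qed
    let ?p0 = "start (snd (last ?ls))"
    show "word_eval G ws \<noteq> \<one>\<^bsub>G\<^esub>"
    proof
      assume eq: "word_eval G ws = \<one>\<^bsub>G\<^esub>"
      have "vecI (foldr step ?ls ?p0) = RL (word_eval G ws) (vecI ?p0)" using word h by simp
      also have "\<dots> = vecI ?p0" using eq oneG RL_one by simp
      finally have "foldr step ?ls ?p0 = ?p0" using vecI_inj by simp
      then show False using pingpong[OF lsne red] reg_start by metis
    qed
  qed
  have notcyc: "\<not> is_cyclic G"
  proof
    assume "is_cyclic G"
    then obtain g where g: "g \<in> carrier G" "generate G {g} = carrier G" by (auto simp: is_cyclic_def)
    then have "a \<in> generate G {g}" "b \<in> generate G {g}" using aG bG by auto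
    then obtain i j :: int where ai: "a = g [^]\<^bsub>G\<^esub> i" and bj: "b = g [^]\<^bsub>G\<^esub> j"
      using G.generate_pow[OF g(1)] by auto
    have "a \<otimes>\<^bsub>G\<^esub> b = b \<otimes>\<^bsub>G\<^esub> a"
      unfolding ai bj using G.int_pow_mult[OF g(1), symmetric] by (simp add: add.commute)
    then have comm: "a \<otimes>\<^bsub>LL s r\<^esub> b = b \<otimes>\<^bsub>LL s r\<^esub> a" using multG by simp
    have "RL (a \<otimes>\<^bsub>LL s r\<^esub> b) (vecI (0, 1)) = vecI (step (True, True) (step (True, False) (0, 1)))"
      using RL_mult[OF ac bc] RLa RLb by simp
    moreover have "RL (b \<otimes>\<^bsub>LL s r\<^esub> a) (vecI (0, 1)) = vecI (step (True, False) (step (True, True) (0, 1)))"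
      using RL_mult[OF bc ac] RLa RLb by simp
    ultimately show False using comm vecI_inj by simp
  qed
  have fg: "is_free_group G" using grpG free by (auto simp: is_free_group_def)
  show ?thesis
    using aU bU fg notcyc unfolding Let_def a_def b_def a_el_def b_el_def U_def G_def
    by blast
qed

end

theorem theorem4p5:
  fixes s r :: "'e \<Rightarrow> 'v::finite"
    and H :: "'v set" and w :: 'v
    and P :: "('v, 'e, 'k::field_char_0) fa set set"
  assumes hH: "hereditary s r H"
    and sH: "saturated s r H"
    and wB: "w \<in> breaking_vertices s r H"
    and Mw: "Mset s r w = UNIV - H"
    and P_def: "P = IHS s r H (breaking_vertices s r H - {w})"
    and noncomm: "\<exists>x\<in>carrier (LPA s r Quot P). \<exists>y\<in>carrier (LPA s r Quot P).
                    x \<otimes>\<^bsub>LPA s r Quot P\<^esub> y \<noteq> y \<otimes>\<^bsub>LPA s r Quot P\<^esub> x"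
  shows "\<exists>f. r f = w \<and>
    (let L = (LPA s r :: ('v, 'e, 'k) fa set ring);
         a = \<one>\<^bsub>L\<^esub> \<oplus>\<^bsub>L\<^esub> (\<one>\<^bsub>L\<^esub> \<oplus>\<^bsub>L\<^esub> \<one>\<^bsub>L\<^esub>) \<otimes>\<^bsub>L\<^esub> vH s r H w \<otimes>\<^bsub>L\<^esub> lghost s r f;
         b = \<one>\<^bsub>L\<^esub> \<oplus>\<^bsub>L\<^esub> (\<one>\<^bsub>L\<^esub> \<oplus>\<^bsub>L\<^esub> \<one>\<^bsub>L\<^esub>) \<otimes>\<^bsub>L\<^esub> ledge s r f \<otimes>\<^bsub>L\<^esub> vH s r H w;
         U = units_of L;
         G = U\<lparr>carrier := generate U {a, b}\<rparr>
     in a \<in> Units L \<and> b \<in> Units L \<and> is_free_group G \<and> \<not> is_cyclic G)"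
proof -
  have inf: "infinite {e. s e = w}" and wH: "w \<notin> H" and finT: "finite {e. s e = w \<and> r e \<notin> H}"
    and cT: "1 \<le> card {e. s e = w \<and> r e \<notin> H}"
    using wB by (auto simp: breaking_vertices_def infinite_emitter_def)
  have nreg: "\<not> regular s w" using inf by (simp add: regular_def)
  have "{e. s e = w \<and> r e \<notin> H} \<noteq> {}"
  proof
    assume e: "{e. s e = w \<and> r e \<notin> H} = {}"
    have "card {e. s e = w \<and> r e \<notin> H} = 0" by (simp only: e card.empty)
    then show False using cT by linarith
  qed
  then obtain e0 where e0: "s e0 = w" "r e0 \<notin> H" by auto
  have "r e0 \<in> Mset s r w" using Mw e0 by auto
  then have path: "(r e0, w) \<in> {(s e, r e) | e. True}\<^sup>*"
    by (simp add: Mset_def geq_path_def path_rel_def)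
  obtain f where rf: "r f = w"
  proof (cases "r e0 = w")
    case True then show ?thesis using that by blast
  next
    case False
    from path False obtain y where "(y, w) \<in> {(s e, r e) | e. True}"
      by (blast elim: rtranclE)
    then show ?thesis using that by blast
  qed
  interpret lsetup s r H w f
    by unfold_locales (use nreg finT rf wH in auto)
  show ?thesis using main by (intro exI[of _ f]) (simp add: rf)
qed

end
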